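(* Let $\mathbf f\in W^{2,\infty}(\mathbb{R}/\mathbb{Z},\mathbb{R}^n)$ satisfy $L_1\,d_{\mathbb{R}/\mathbb{Z}}(\theta,\theta')\le\|\mathbf f(\theta)-\mathbf f(\theta')\|\le L_2\,d_{\mathbb{R}/\mathbb{Z}}(\theta,\theta')$ for all $\theta,\theta'$, with constants $0<L_1\le L_2$. For each $m$ let $0\le\theta_1<\dots<\theta_m<1$ (depending on $m$; indices cyclic, $\theta_{k+m}=\theta_k+1$) satisfy the equilateral condition $\|\Delta_k\mathbf f\|=L_m/m$ for $k=1,\dots,m$, where $L_m=\sum_{k=1}^m\|\Delta_k\mathbf f\|$. Define \[ \mathscr P^m_{1,ij}(\mathbf f)=\frac12\frac{g_{ij,d}}{g_{ij,n}}\left\{\Big(1-\frac{\Delta_i\mathbf f}{\|\Delta_i\mathbf f\|}\cdot\frac{\Delta_j\mathbf f}{\|\Delta_j\mathbf f\|}\Big)+\Big(1-\frac{\Delta_{i+1}\mathbf f}{\|\Delta_{i+1}\mathbf f\|}\cdot\frac{\Delta_{j+1}\mathbf f}{\|\Delta_{j+1}\mathbf f\|}\Big)\right\}, \] with $g_{ij,d}=\|\Delta_i\mathbf f\|\,\|\Delta_j\mathbf f\|$ and $g_{ij,n}=\|\Delta_i^j\mathbf f\|\,\|\Delta_{i+1}^{j+1}\mathbf f\|$. Then \[ \lim_{m\to\infty}\sum_{i\ne j}\mathscr P^m_{1,ij}(\mathbf f)=\mathcal E_1(\mathbf f). \]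
   Context: $\Delta_i^j\mathbf f=\mathbf f(\theta_j)-\mathbf f(\theta_i)$, $\Delta_i\mathbf f=\Delta_i^{i+1}\mathbf f$, with $\mathbf f$ regarded as $1$-periodic on $\mathbb{R}$; the sum is over ordered pairs $(i,j)\in\{1,\dots,m\}^2$ with $i\ne j$. With $\boldsymbol\gamma$ the arc-length reparametrization of $\mathbf f$ (length $\mathcal L$), $\boldsymbol\tau=\boldsymbol\gamma'$, $\mathcal{E}_1(\mathbf f)=\frac12\iint_{(\mathbb{R}/\mathcal L\mathbb{Z})^2}\frac{\|\boldsymbol\tau(s_1)-\boldsymbol\tau(s_2)\|^2}{\|\boldsymbol\gamma(s_1)-\boldsymbol\gamma(s_2)\|^2}ds_1ds_2$. *)

theory Defs
  imports "HOL-Analysis.Analysis"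
begin

definition circ_dist :: "real \<Rightarrow> real \<Rightarrow> real" where
  "circ_dist x y = min (frac (x - y)) (1 - frac (x - y))"

text \<open>1-periodic closed curve of class W^{2,infinity} on R/Z, i.e. (for the continuous
  representative) differentiable with Lipschitz continuous derivative.\<close>
definition W2inf_periodic :: "(real \<Rightarrow> 'a::euclidean_space) \<Rightarrow> bool" where
  "W2inf_periodic f \<longleftrightarrow>
     (\<forall>x. f (x + 1) = f x) \<and>
     (\<forall>x. f differentiable (at x)) \<and>
     (\<exists>C. \<forall>x y. norm (vector_derivative f (at x) - vector_derivative f (at y)) \<le> C * \<bar>x - y\<bar>)"

text \<open>Cyclically indexed polygon vertices f(theta_k); indices 0..m-1 (the paper's 1..m shifted);
  theta_{k+m} = theta_k + 1 and f is 1-periodic, so f(theta_k) = f(theta_(k mod m)).\<close>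
definition cyc_pt :: "(real \<Rightarrow> 'a::euclidean_space) \<Rightarrow> (nat \<Rightarrow> real) \<Rightarrow> nat \<Rightarrow> nat \<Rightarrow> 'a" where
  "cyc_pt f \<theta> m k = f (\<theta> (k mod m))"

definition Delta :: "(real \<Rightarrow> 'a::euclidean_space) \<Rightarrow> (nat \<Rightarrow> real) \<Rightarrow> nat \<Rightarrow> nat \<Rightarrow> nat \<Rightarrow> 'a" where
  "Delta f \<theta> m i j = cyc_pt f \<theta> m j - cyc_pt f \<theta> m i"

definition Delta1 :: "(real \<Rightarrow> 'a::euclidean_space) \<Rightarrow> (nat \<Rightarrow> real) \<Rightarrow> nat \<Rightarrow> nat \<Rightarrow> 'a" where
  "Delta1 f \<theta> m i = Delta f \<theta> m i (Suc i)"

definition P1 :: "(real \<Rightarrow> 'a::euclidean_space) \<Rightarrow> (nat \<Rightarrow> real) \<Rightarrow> nat \<Rightarrow> nat \<Rightarrow> nat \<Rightarrow> real" where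
  "P1 f \<theta> m i j =
     (let gd = norm (Delta1 f \<theta> m i) * norm (Delta1 f \<theta> m j);
          gn = norm (Delta f \<theta> m i j) * norm (Delta f \<theta> m (Suc i) (Suc j));
          u = \<lambda>k. Delta1 f \<theta> m k /\<^sub>R norm (Delta1 f \<theta> m k)
      in 1/2 * (gd / gn) * ((1 - u i \<bullet> u j) + (1 - u (Suc i) \<bullet> u (Suc j))))"

definition disc_E1 :: "(real \<Rightarrow> 'a::euclidean_space) \<Rightarrow> (nat \<Rightarrow> real) \<Rightarrow> nat \<Rightarrow> real" where
  "disc_E1 f \<theta> m = (\<Sum>(i, j) \<in> {(i, j). i < m \<and> j < m \<and> i \<noteq> j}. P1 f \<theta> m i j)"

definition arclen :: "(real \<Rightarrow> 'a::euclidean_space) \<Rightarrow> real \<Rightarrow> real" where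
  "arclen f t = integral {0..t} (\<lambda>u. norm (vector_derivative f (at u)))"

definition curve_length :: "(real \<Rightarrow> 'a::euclidean_space) \<Rightarrow> real" where
  "curve_length f = arclen f 1"

definition arclen_param :: "(real \<Rightarrow> 'a::euclidean_space) \<Rightarrow> real \<Rightarrow> 'a" where
  "arclen_param f = f \<circ> inv_into {0..1} (arclen f)"

definition E1 :: "(real \<Rightarrow> 'a::euclidean_space) \<Rightarrow> real" where
  "E1 f = (let L = curve_length f; \<gamma> = arclen_param f;
               \<tau> = (\<lambda>s. vector_derivative \<gamma> (at s))
           in 1/2 * (LINT p:{0..L} \<times> {0..L}|lborel.
                 (norm (\<tau> (fst p) - \<tau> (snd p)))\<^sup>2 / (norm (\<gamma> (fst p) - \<gamma> (snd p)))\<^sup>2))"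

end

theory Submission
  imports Defs
begin

lemma circ_dist_le: "circ_dist x y \<le> \<bar>x - y\<bar>"
proof -
  have "frac (x-y) \<le> x - y" if "x - y \<ge> 0" using that by (simp add: frac_def)
  moreover have "1 - frac (x-y) \<le> y - x" if "x - y < 0"
  proof -
    have "floor (x-y) \<le> -1" using that by linarith
    then show ?thesis unfolding frac_def by linarith
  qed
  ultimately show ?thesis unfolding circ_dist_def by (cases "x - y \<ge> 0") auto
qed

lemma circ_dist_nonneg: "circ_dist x y \<ge> 0"
  unfolding circ_dist_def using frac_lt_1[of "x-y"] frac_ge_0[of "x-y"] by simp

lemma circ_dist_eq: assumes "0 \<le> x - y" "x - y \<le> 1/2" shows "circ_dist x y = x - y"
proof -
  have "frac (x-y) = x - y" using assms by (simp add: frac_eq)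
  then show ?thesis unfolding circ_dist_def using assms by simp
qed

lemma circ_dist_sym: "circ_dist x y = circ_dist y x"
proof (cases "x - y \<in> \<int>")
  case True
  then have "y - x \<in> \<int>" by (metis Ints_minus minus_diff_eq)
  then show ?thesis using True unfolding circ_dist_def by (simp add: frac_eq_0_iff[THEN iffD2])
next
  case False
  have "frac (y - x) = 1 - frac (x - y)" using frac_neg[of "x-y"] False by simp
  then show ?thesis unfolding circ_dist_def by simp
qed

lemma circ_dist_shift: "circ_dist (x + of_int n) y = circ_dist x y"
proof -
  have "frac (x + of_int n - y) = frac (x - y)"
    proof -
    have "x + of_int n - y = (x - y) + of_int n" by simp
    then show ?thesis by (simp only: frac_add_of_int_right)
  qed
  then show ?thesis unfolding circ_dist_def by simp
qed

lemma circ_dist_pos: assumes "x \<noteq> y" "\<bar>x - y\<bar> < 1" shows "circ_dist x y > 0"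
proof -
  have "x - y \<notin> \<int>"
  proof
    assume "x - y \<in> \<int>"
    then obtain k where k: "x - y = of_int k" by (auto elim: Ints_cases)
    then have "\<bar>real_of_int k\<bar> < 1" using assms by simp
    then have "k = 0" by (simp add: abs_less_iff)
    then show False using k assms by simp
  qed
  then have "frac (x-y) > 0" using frac_ge_0[of "x-y"] frac_eq_0_iff[of "x-y"] by linarith
  then show ?thesis unfolding circ_dist_def using frac_lt_1[of "x-y"] by simp
qed

lemma circ_dist_int: "\<exists>n::int. \<bar>x - (y + of_int n)\<bar> = circ_dist x y"
proof (cases "frac (x - y) \<le> 1/2")
  case True
  have fl: "real_of_int (floor (x-y)) \<le> x - y" by (rule of_int_floor_le)
  have "\<bar>x - (y + of_int (floor (x-y)))\<bar> = frac (x - y)" using fl unfolding frac_def by linarith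
  then show ?thesis unfolding circ_dist_def using True by auto
next
  case False
  have fl: "x - y < real_of_int (floor (x-y)) + 1" by (rule real_of_int_floor_add_one_gt)
  have "\<bar>x - (y + of_int (floor (x-y) + 1))\<bar> = 1 - frac (x - y)" using fl unfolding frac_def by simp linarith
  then show ?thesis unfolding circ_dist_def using False by (intro exI[of _ "floor (x-y) + 1"]) auto
qed

lemma unit_diff_le:
  fixes a b :: "'a::real_normed_vector"
  assumes "b \<noteq> 0"
  shows "norm (a /\<^sub>R norm a - b /\<^sub>R norm b) \<le> 2 * norm (a - b) / norm b"
proof (cases "a = 0")
  case True
  then show ?thesis using assms by simp
next
  case False
  have "a /\<^sub>R norm a - b /\<^sub>R norm b = (a - b) /\<^sub>R norm b + (inverse (norm a) - inverse (norm b)) *\<^sub>R a"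
    by (simp add: algebra_simps)
  also have "norm \<dots> \<le> norm (a - b) / norm b + \<bar>inverse (norm a) - inverse (norm b)\<bar> * norm a"
    by (rule order_trans[OF norm_triangle_ineq]) (simp add: divide_inverse)
  also have "\<bar>inverse (norm a) - inverse (norm b)\<bar> * norm a = \<bar>norm b - norm a\<bar> / norm b"
    using False assms by (simp add: field_simps abs_mult[symmetric] abs_divide)
  also have "\<dots> \<le> norm (a - b) / norm b"
    by (intro divide_right_mono) (auto simp: norm_triangle_ineq3 abs_minus_commute)
  finally show ?thesis by simp
qed


lemma per_int_gen:
  fixes g :: "real \<Rightarrow> 'b"
  assumes "\<And>x. g (x + 1) = g x"
  shows "g (x + of_int n) = g x"
proof -
  have nat: "g (y + real k) = g y" for y k
  proof (induction k)
    case (Suc k)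
    have "g (y + real (Suc k)) = g ((y + real k) + 1)" by (simp add: algebra_simps)
    also have "\<dots> = g (y + real k)" by (rule assms)
    finally show ?case using Suc by simp
  qed simp
  show ?thesis
  proof (cases "n \<ge> 0")
    case True
    then show ?thesis using nat[of x "nat n"] by simp
  next
    case False
    have "g (x + of_int n) = g (x + of_int n + real (nat (-n)))" by (rule nat[symmetric])
    also have "x + of_int n + real (nat (-n)) = x" using False by simp
    finally show ?thesis .
  qed
qed

locale curve =
  fixes f :: "real \<Rightarrow> 'a::euclidean_space" and L1 L2 :: real
  assumes W: "W2inf_periodic f" and L1pos: "0 < L1" and L12: "L1 \<le> L2"
    and bil: "\<forall>x y. L1 * circ_dist x y \<le> norm (f x - f y) \<and> norm (f x - f y) \<le> L2 * circ_dist x y"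
begin

definition D where "D x = vector_derivative f (at x)"
definition nD where "nD x = norm (D x)"
definition v where "v x = D x /\<^sub>R norm (D x)"
definition Cl where "Cl = max 0 (SOME C. \<forall>x y. norm (D x - D y) \<le> C * \<bar>x - y\<bar>)"
definition Kv where "Kv = 2 * Cl / L1"

lemma per: "f (x + 1) = f x" using W unfolding W2inf_periodic_def by auto
lemma per_int: "f (x + of_int n) = f x" using per_int_gen[of f, OF per] by blast

lemma hasD: "(f has_vector_derivative D x) (at x)"
  using W unfolding W2inf_periodic_def D_def by (simp add: vector_derivative_works[symmetric])

lemma Cl_nonneg: "0 \<le> Cl" unfolding Cl_def by simp

lemma DLip: "norm (D x - D y) \<le> Cl * \<bar>x - y\<bar>"
proof -
  have "\<exists>C. \<forall>x y. norm (D x - D y) \<le> C * \<bar>x - y\<bar>"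
    using W unfolding W2inf_periodic_def D_def by auto
  then have "\<forall>x y. norm (D x - D y) \<le> (SOME C. \<forall>x y. norm (D x - D y) \<le> C * \<bar>x - y\<bar>) * \<bar>x - y\<bar>"
    by (rule someI_ex)
  then have "norm (D x - D y) \<le> (SOME C. \<forall>x y. norm (D x - D y) \<le> C * \<bar>x - y\<bar>) * \<bar>x - y\<bar>" by blast
  also have "\<dots> \<le> Cl * \<bar>x - y\<bar>" unfolding Cl_def by (intro mult_right_mono) auto
  finally show ?thesis .
qed

lemma D_cont: "continuous_on UNIV D"
proof (rule continuous_onI)
  fix x :: real and e :: real assume "x \<in> UNIV" "0 < e"
  show "\<exists>d>0. \<forall>x'\<in>UNIV. dist x' x < d \<longrightarrow> dist (D x') (D x) \<le> e"
  proof (intro exI[of _ "e / (Cl + 1)"] conjI ballI impI)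
    show "0 < e / (Cl + 1)" using \<open>0 < e\<close> Cl_nonneg by simp
    fix x' assume "dist x' x < e / (Cl + 1)"
    then have "\<bar>x' - x\<bar> * (Cl + 1) < e" using Cl_nonneg by (simp add: dist_real_def field_simps)
    moreover have "dist (D x') (D x) \<le> Cl * \<bar>x' - x\<bar>" using DLip by (simp add: dist_norm)
    moreover have "Cl * \<bar>x' - x\<bar> \<le> \<bar>x' - x\<bar> * (Cl + 1)" by (simp add: algebra_simps)
    ultimately show "dist (D x') (D x) \<le> e" by linarith
  qed
qed

lemma nD_cont: "continuous_on S nD"
  unfolding nD_def by (intro continuous_intros continuous_on_subset[OF D_cont]) auto

lemma f_lip: "norm (f x - f y) \<le> L2 * \<bar>x - y\<bar>"
proof -
  have "norm (f x - f y) \<le> L2 * circ_dist x y" using bil by auto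
  also have "\<dots> \<le> L2 * \<bar>x - y\<bar>" using L1pos L12 circ_dist_le by (intro mult_left_mono) auto
  finally show ?thesis .
qed

lemma f_cont: "continuous_on S f"
  using hasD by (meson continuous_at_imp_continuous_on has_vector_derivative_continuous)

lemma taylor: "norm (f y - f x - (y - x) *\<^sub>R D x) \<le> Cl * (y - x)\<^sup>2"
proof -
  have "norm (f y - f x - (y - x) *\<^sub>R D x) \<le> norm (y - x) * (Cl * \<bar>y - x\<bar>)"
  proof (rule vector_differentiable_bound_linearization[where S="closed_segment x y"])
    show "\<And>z. z \<in> closed_segment x y \<Longrightarrow> (f has_vector_derivative D z) (at z within closed_segment x y)"
      using hasD has_vector_derivative_at_within by blast
    show "closed_segment x y \<subseteq> closed_segment x y" by simp
    show "x \<in> closed_segment x y" by simp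
    fix z assume "z \<in> closed_segment x y"
    then have "\<bar>z - x\<bar> \<le> \<bar>y - x\<bar>" by (auto simp: closed_segment_eq_real_ivl split: if_splits)
    then show "norm (D z - D x) \<le> Cl * \<bar>y - x\<bar>"
      using DLip[of z x] Cl_nonneg by (meson mult_left_mono order_trans)
  qed
  also have "norm (y - x) * (Cl * \<bar>y - x\<bar>) = Cl * (\<bar>y - x\<bar> * \<bar>y - x\<bar>)" by (simp add: mult_ac)
  also have "\<dots> = Cl * (y - x)\<^sup>2" by (simp only: abs_mult_self_eq power2_eq_square)
  finally show ?thesis .
qed

lemma D_upper: "norm (D x) \<le> L2"
proof (rule ccontr)
  assume "\<not> norm (D x) \<le> L2"
  define h where "h = (norm (D x) - L2) / (Cl + 1)"
  have hpos: "h > 0" using \<open>\<not> norm (D x) \<le> L2\<close> Cl_nonneg by (simp add: h_def)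
  have "h * norm (D x) = norm ((x + h - x) *\<^sub>R D x)" using hpos by simp
  also have "\<dots> \<le> norm (f (x + h) - f x) + norm (f (x + h) - f x - (x + h - x) *\<^sub>R D x)"
    by (metis norm_triangle_ineq4 norm_minus_commute add.commute diff_add_cancel dual_order.trans norm_triangle_sub order_refl)
  also have "\<dots> \<le> L2 * h + Cl * h\<^sup>2"
    using f_lip[of "x+h" x] taylor[of "x + h" x] hpos by simp
  finally have "h * norm (D x) \<le> L2 * h + Cl * h * h" by (simp add: power2_eq_square)
  then have "h * norm (D x) \<le> h * (L2 + Cl * h)" by (simp add: algebra_simps)
  then have "norm (D x) \<le> L2 + Cl * h" using hpos by (simp add: mult_le_cancel_left_pos)
  moreover have "Cl * h < norm (D x) - L2"
    using hpos Cl_nonneg \<open>\<not> norm (D x) \<le> L2\<close> unfolding h_def by (simp add: field_simps)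
  ultimately show False by linarith
qed

lemma D_lower: "L1 \<le> norm (D x)"
proof (rule ccontr)
  assume "\<not> L1 \<le> norm (D x)"
  define h where "h = min (1/2) ((L1 - norm (D x)) / (Cl + 1))"
  have hpos: "h > 0" using \<open>\<not> L1 \<le> norm (D x)\<close> Cl_nonneg by (simp add: h_def)
  have hle: "h \<le> 1/2" unfolding h_def by (rule min.cobounded1)
  have "circ_dist (x + h) x = h" using hpos hle by (subst circ_dist_eq) auto
  then have "L1 * h \<le> norm (f (x + h) - f x)" using bil by metis
  also have "\<dots> \<le> norm ((x + h - x) *\<^sub>R D x) + norm (f (x + h) - f x - (x + h - x) *\<^sub>R D x)"
    by (rule norm_triangle_sub)
  also have "\<dots> \<le> h * norm (D x) + Cl * h\<^sup>2"
    using taylor[of "x + h" x] hpos by simp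
  finally have "L1 * h \<le> h * norm (D x) + Cl * h * h" by (simp add: power2_eq_square)
  then have "h * L1 \<le> h * (norm (D x) + Cl * h)" by (simp add: algebra_simps)
  then have "L1 \<le> norm (D x) + Cl * h" using hpos by (simp add: mult_le_cancel_left_pos)
  moreover have "Cl * h < L1 - norm (D x)"
  proof -
    have "Cl * h \<le> Cl * ((L1 - norm (D x)) / (Cl + 1))"
      using Cl_nonneg by (intro mult_left_mono) (auto simp: h_def)
    also have "\<dots> < L1 - norm (D x)"
      using Cl_nonneg \<open>\<not> L1 \<le> norm (D x)\<close> by (simp add: field_simps)
    finally show ?thesis .
  qed
  ultimately show False by linarith
qed

lemma D_nz: "D x \<noteq> 0" using D_lower[of x] L1pos by auto

lemma D_per: "D (x + 1) = D x"
proof -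
  have "((f \<circ> (\<lambda>t. t + 1)) has_vector_derivative (1 *\<^sub>R D (x + 1))) (at x)"
    by (rule vector_diff_chain_at) (auto intro!: derivative_eq_intros hasD)
  moreover have "f \<circ> (\<lambda>t. t + 1) = f" using per by (auto simp: o_def)
  ultimately have "(f has_vector_derivative D (x + 1)) (at x)" by simp
  then show ?thesis using hasD vector_derivative_unique_at by blast
qed

lemma D_per_int: "D (x + of_int n) = D x" using per_int_gen[of D, OF D_per] by blast

lemma v_norm: "norm (v x) = 1" using D_nz by (simp add: v_def)

lemma v_per_int: "v (x + of_int n) = v x" by (simp add: v_def D_per_int)

lemma v_lip: "norm (v x - v y) \<le> Kv * \<bar>x - y\<bar>"
proof -
  have "norm (v x - v y) \<le> 2 * norm (D x - D y) / norm (D y)"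
    unfolding v_def by (rule unit_diff_le[OF D_nz])
  also have "\<dots> \<le> 2 * (Cl * \<bar>x - y\<bar>) / L1"
    using D_lower[of y] L1pos DLip[of x y] Cl_nonneg by (intro frac_le) auto
  finally show ?thesis by (simp add: Kv_def)
qed

lemma Kv_nonneg: "0 \<le> Kv" using Cl_nonneg L1pos by (simp add: Kv_def)

lemma v_circ: "norm (v x - v y) \<le> Kv * circ_dist x y"
proof -
  obtain n where n: "\<bar>x - (y + of_int n)\<bar> = circ_dist x y" using circ_dist_int by blast
  have "norm (v x - v y) = norm (v x - v (y + of_int n))" by (simp add: v_per_int)
  also have "\<dots> \<le> Kv * circ_dist x y" using v_lip[of x "y + of_int n"] n by simp
  finally show ?thesis .
qed

lemma v_f: "norm (v x - v y) \<le> (Kv / L1) * norm (f x - f y)"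
proof -
  have "norm (v x - v y) \<le> Kv * circ_dist x y" by (rule v_circ)
  also have "\<dots> \<le> Kv * (norm (f x - f y) / L1)"
    using bil L1pos Kv_nonneg by (intro mult_left_mono) (auto simp: field_simps)
  finally show ?thesis by simp
qed

end

context curve begin

abbreviation "\<phi> \<equiv> arclen f"
definition Lp where "Lp = arclen f 1"
definition \<psi> where "\<psi> = inv_into {0..1} (arclen f)"

lemma nD_int: "nD integrable_on {a..b}"
  by (rule integrable_continuous_real[OF nD_cont])

lemma arclen_unfold: "arclen f t = integral {0..t} nD"
  unfolding arclen_def nD_def D_def by simp

lemma arclen_fun: "arclen f = (\<lambda>t. integral {0..t} nD)"
  using arclen_unfold by auto

lemma arc_diff: assumes "0 \<le> x" "x \<le> y" shows "\<phi> y - \<phi> x = integral {x..y} nD"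
  using Henstock_Kurzweil_Integration.integral_combine[OF assms nD_int] by (simp add: arclen_unfold)

lemma arc_bounds: assumes "0 \<le> x" "x \<le> y"
  shows "L1 * (y - x) \<le> \<phi> y - \<phi> x" "\<phi> y - \<phi> x \<le> L2 * (y - x)"
proof -
  have "integral {x..y} (\<lambda>_. L1) \<le> integral {x..y} nD"
    by (rule integral_le) (auto simp: nD_int nD_def D_lower)
  then show "L1 * (y - x) \<le> \<phi> y - \<phi> x" using assms by (simp add: arc_diff mult.commute)
  have "integral {x..y} nD \<le> integral {x..y} (\<lambda>_. L2)"
    by (rule integral_le) (auto simp: nD_int nD_def D_upper)
  then show "\<phi> y - \<phi> x \<le> L2 * (y - x)" using assms by (simp add: arc_diff mult.commute)
qed

lemma arc_taylor: assumes "0 \<le> x" "x \<le> y"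
  shows "\<bar>\<phi> y - \<phi> x - (y - x) * nD x\<bar> \<le> Cl * (y - x)\<^sup>2"
proof -
  have hi: "((\<lambda>u. nD u - nD x) has_integral (integral {x..y} nD - (y - x) * nD x)) {x..y}"
    using has_integral_diff[OF integrable_integral[OF nD_int] has_integral_const_real[of "nD x" x y]] assms
    by simp
  have bnd: "\<bar>nD u - nD x\<bar> \<le> Cl * (y - x)" if "u \<in> {x..y} - {}" for u
  proof -
    have "\<bar>u - x\<bar> \<le> y - x" using that by auto
    moreover have "\<bar>nD u - nD x\<bar> \<le> Cl * \<bar>u - x\<bar>"
      unfolding nD_def by (rule order_trans[OF norm_triangle_ineq3 DLip])
    ultimately show "\<bar>nD u - nD x\<bar> \<le> Cl * (y - x)" using Cl_nonneg
      by (meson mult_left_mono order_trans)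
  qed
  have "norm (integral {x..y} nD - (y - x) * nD x) \<le> (Cl * (y - x)) * (y - x)"
    using has_integral_bound_real[OF _ finite.emptyI hi, of "Cl * (y - x)"] bnd Cl_nonneg assms
    by simp
  then show ?thesis using assms by (simp add: arc_diff power2_eq_square mult.assoc)
qed

lemma arc_mono: "0 \<le> x \<Longrightarrow> x < y \<Longrightarrow> \<phi> x < \<phi> y"
proof -
  assume a: "0 \<le> x" "x < y"
  have "L1 * (y - x) > 0" using a L1pos by simp
  then show ?thesis using arc_bounds(1)[of x y] a by linarith
qed

lemma arc_mono_le: "0 \<le> x \<Longrightarrow> x \<le> y \<Longrightarrow> \<phi> x \<le> \<phi> y"
  using arc_mono[of x y] by (cases "x = y") auto

lemma arc_mono_iff: assumes "0 \<le> x" "0 \<le> y" shows "\<phi> x < \<phi> y \<longleftrightarrow> x < y"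
proof
  assume "\<phi> x < \<phi> y"
  then show "x < y" using arc_mono_le[of y x] assms by (meson linorder_not_le)
next
  assume "x < y" then show "\<phi> x < \<phi> y" using arc_mono[of x y] assms by simp
qed

lemma arc_mono_le_iff: "0 \<le> x \<Longrightarrow> 0 \<le> y \<Longrightarrow> \<phi> x \<le> \<phi> y \<longleftrightarrow> x \<le> y"
  using arc_mono_iff[of y x] by (meson linorder_not_le)

lemma arc_0: "\<phi> 0 = 0" by (simp add: arclen_unfold)

lemma Lp_pos: "Lp > 0" using arc_mono[of 0 1] arc_0 by (simp add: Lp_def)

lemma Lp_ge: "L1 \<le> Lp" using arc_bounds(1)[of 0 1] arc_0 by (simp add: Lp_def)

lemma arc_nonneg: "0 \<le> x \<Longrightarrow> 0 \<le> \<phi> x" using arc_mono_le[of 0 x] arc_0 by simp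

lemma nD_per: "nD (1 + u) = nD u" using D_per[of u] by (simp add: nD_def add.commute)

lemma arc_per: assumes "0 \<le> t" shows "\<phi> (t + 1) = \<phi> t + Lp"
proof -
  have "\<phi> (t + 1) = integral {0..1} nD + integral {1..t+1} nD"
    using Henstock_Kurzweil_Integration.integral_combine[of 0 1 "t+1" nD] assms nD_int by (simp add: arclen_unfold)
  also have "integral {1..t+1} nD = integral {0..t} (nD \<circ> (+) 1)"
    using integral_shift_Icc_real[of 0 t nD 1] by (simp add: add.commute)
  also have "nD \<circ> (+) 1 = nD" using nD_per by (auto simp: o_def)
  finally show ?thesis by (simp add: arclen_unfold Lp_def)
qed

lemma arc_deriv: assumes "0 < t" shows "(\<phi> has_real_derivative nD t) (at t)"
proof -
  have "((\<lambda>x. integral {0..x} nD) has_real_derivative nD t) (at t within {0..t+1})"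
    by (rule integral_has_real_derivative[OF nD_cont]) (use assms in auto)
  moreover have "t \<in> interior {0..t+1}" using assms by auto
  ultimately show ?thesis unfolding arclen_fun by (simp only: at_within_interior)
qed

lemma arc_cont: "continuous_on {0..b} \<phi>"
proof -
  have "continuous_on {0..b} (\<lambda>x. integral {0..x} nD)"
    by (rule DERIV_continuous_on[OF integral_has_real_derivative[OF nD_cont]]) 
  then show ?thesis unfolding arclen_fun .
qed

lemma arc_inj: "inj_on \<phi> {0..1}"
proof (rule inj_onI)
  fix x y assume "x \<in> {0..1}" "y \<in> {0..1}" "\<phi> x = \<phi> y"
  then show "x = y" using arc_mono_iff[of x y] arc_mono_iff[of y x] by auto
qed

lemma arc_image: "\<phi> ` {0..1} = {0..Lp}"
proof
  show "\<phi> ` {0..1} \<subseteq> {0..Lp}"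
    using arc_mono_le arc_nonneg by (auto simp: Lp_def)
  show "{0..Lp} \<subseteq> \<phi> ` {0..1}"
  proof
    fix s assume "s \<in> {0..Lp}"
    then obtain x where "0 \<le> x" "x \<le> 1" "\<phi> x = s"
      using IVT'[of \<phi> 0 s 1] arc_cont arc_0 by (auto simp: Lp_def)
    then show "s \<in> \<phi> ` {0..1}" by auto
  qed
qed

lemma psi_in: "s \<in> {0..Lp} \<Longrightarrow> \<psi> s \<in> {0..1}"
  unfolding \<psi>_def using arc_image by (metis inv_into_into)

lemma arc_psi: "s \<in> {0..Lp} \<Longrightarrow> \<phi> (\<psi> s) = s"
  unfolding \<psi>_def using arc_image by (metis f_inv_into_f)

lemma psi_arc: "t \<in> {0..1} \<Longrightarrow> \<psi> (\<phi> t) = t"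
  unfolding \<psi>_def using arc_inj by (rule inv_into_f_f)

lemma psi_cont: "continuous_on {0..Lp} \<psi>"
  using continuous_on_inv[OF arc_cont[of 1] compact_Icc, of \<psi>] psi_arc arc_image by simp

lemma psi_lt1: assumes "s \<in> {0..<Lp}" shows "\<psi> s < 1"
proof -
  have "\<psi> s \<in> {0..1}" "\<phi> (\<psi> s) = s" using assms psi_in arc_psi by auto
  moreover have "\<psi> s \<noteq> 1" using calculation assms by (auto simp: Lp_def)
  ultimately show ?thesis by auto
qed

lemma psi_gt0: assumes "s \<in> {0<..Lp}" shows "0 < \<psi> s"
proof -
  have "\<psi> s \<in> {0..1}" "\<phi> (\<psi> s) = s" using assms psi_in arc_psi by auto
  moreover have "\<psi> s \<noteq> 0" using calculation assms arc_0 by auto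
  ultimately show ?thesis by auto
qed

lemma psi_deriv: assumes "s \<in> {0<..<Lp}" shows "(\<psi> has_real_derivative inverse (nD (\<psi> s))) (at s)"
proof (rule DERIV_inverse_function[where f=\<phi> and a=0 and b=Lp])
  show "(\<phi> has_real_derivative nD (\<psi> s)) (at (\<psi> s))"
    using assms psi_gt0 by (intro arc_deriv) auto
  show "nD (\<psi> s) \<noteq> 0" using D_nz by (simp add: nD_def)
  show "0 < s" "s < Lp" using assms by auto
  show "\<And>y. 0 < y \<Longrightarrow> y < Lp \<Longrightarrow> \<phi> (\<psi> y) = y" using arc_psi by auto
  have "s \<in> interior {0..Lp}" using assms by auto
  then show "isCont \<psi> s" using continuous_on_interior[OF psi_cont] by blast
qed

lemma gamma_eq: "s \<in> {0..Lp} \<Longrightarrow> arclen_param f s = f (\<psi> s)"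
  by (simp add: arclen_param_def \<psi>_def)

lemma tau_eq: assumes "s \<in> {0<..<Lp}" shows "vector_derivative (arclen_param f) (at s) = v (\<psi> s)"
proof -
  have "(\<psi> has_vector_derivative inverse (nD (\<psi> s))) (at s)"
    using psi_deriv[OF assms] by (simp add: has_real_derivative_iff_has_vector_derivative)
  then have "((f \<circ> \<psi>) has_vector_derivative (inverse (nD (\<psi> s)) *\<^sub>R D (\<psi> s))) (at s)"
    by (rule vector_diff_chain_at) (rule hasD)
  moreover have "arclen_param f = f \<circ> \<psi>" by (simp add: arclen_param_def \<psi>_def)
  ultimately show ?thesis by (simp add: vector_derivative_at v_def nD_def divide_inverse_commute)
qed

end

locale poly = curve f L1 L2 for f :: "real \<Rightarrow> 'a::euclidean_space" and L1 L2 +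
  fixes th :: "nat \<Rightarrow> real" and m :: nat
  assumes m2: "2 \<le> m"
    and th0: "0 \<le> th 0" and thinc: "\<forall>k. Suc k < m \<longrightarrow> th k < th (Suc k)" and thlast: "th (m - 1) < 1"
    and equi: "\<forall>k<m. norm (Delta1 f th m k) = (\<Sum>l<m. norm (Delta1 f th m l)) / real m"
begin

definition Th where "Th k = th (k mod m) + real (k div m)"
definition ell where "ell = (\<Sum>l<m. norm (Delta1 f th m l)) / real m"
definition g where "g k = Th (Suc k) - Th k"
definition u where "u k = Delta1 f th m k /\<^sub>R norm (Delta1 f th m k)"

lemma mpos: "0 < m" using m2 by simp

lemma Th_lt: "k < m \<Longrightarrow> Th k = th k" by (simp add: Th_def)

lemma Th_add: "Th (r + q * m) = Th r + real q"
proof -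
  have "(r + q * m) mod m = r mod m" by simp
  moreover have "(r + q * m) div m = r div m + q" using mpos by simp
  ultimately show ?thesis by (simp add: Th_def)
qed

lemma Th_m: "Th m = th 0 + 1" using Th_add[of 0 1] mpos by (simp add: Th_lt)

lemma Th_add_m: "Th (k + m) = Th k + 1" using Th_add[of k 1] by simp

lemma th_mono_lt: "i < j \<Longrightarrow> j < m \<Longrightarrow> th i < th j"
proof (induction j)
  case (Suc j)
  then show ?case using thinc by (cases "i = j") (auto intro: less_trans)
qed simp

lemma th_range: "k < m \<Longrightarrow> 0 \<le> th k \<and> th k < 1"
proof -
  assume k: "k < m"
  have "th 0 \<le> th k" using th_mono_lt[of 0 k] k by (cases k) auto
  moreover have "th k \<le> th (m - 1)"
  proof (cases "k = m - 1")
    case False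
    then have "k < m - 1" using k by linarith
    then show ?thesis using th_mono_lt[of k "m - 1"] by simp
  qed simp
  ultimately show ?thesis using th0 thlast by auto
qed

lemma Th_step_small: "k < m \<Longrightarrow> Th k < Th (Suc k)"
proof -
  assume k: "k < m"
  show ?thesis
  proof (cases "Suc k < m")
    case True
    then show ?thesis using thinc k by (simp add: Th_lt)
  next
    case False
    then have "k = m - 1" "Suc k = m" using k by auto
    then show ?thesis using Th_m thlast k th0 by (simp add: Th_lt)
  qed
qed

lemma Th_step: "Th k < Th (Suc k)"
proof -
  define r q where "r = k mod m" and "q = k div m"
  have k: "k = r + q * m" by (simp add: r_def q_def)
  have r: "r < m" using mpos by (simp add: r_def)
  have "Th k = Th r + q" using k Th_add by simp
  moreover have "Th (Suc k) = Th (Suc r) + q" using k Th_add[of "Suc r" q] by simp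
  ultimately show ?thesis using Th_step_small[OF r] by simp
qed

lemma Th_strict: "strict_mono Th" by (rule strict_monoI_Suc) (rule Th_step)

lemma Th_less: "i < j \<Longrightarrow> Th i < Th j" using Th_strict by (simp add: strict_mono_less)
lemma Th_le: "i \<le> j \<Longrightarrow> Th i \<le> Th j" using Th_strict by (simp add: strict_mono_less_eq)

lemma Th_nonneg: "0 \<le> Th k" using Th_le[of 0 k] th0 by (simp add: Th_lt mpos)

lemma cyc_Th: "cyc_pt f th m k = f (Th k)"
proof -
  have "f (Th k) = f (th (k mod m) + of_int (int (k div m)))" by (simp add: Th_def)
  also have "\<dots> = f (th (k mod m))" by (rule per_int)
  finally show ?thesis by (simp add: cyc_pt_def)
qed

lemma Delta_eq: "Delta f th m i j = f (Th j) - f (Th i)"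
  by (simp add: Delta_def cyc_Th)

lemma Delta1_eq: "Delta1 f th m k = f (Th (Suc k)) - f (Th k)"
  by (simp add: Delta1_def Delta_eq)

lemma norm_Delta1: "norm (Delta1 f th m k) = ell"
proof -
  have e1: "cyc_pt f th m (Suc k) = cyc_pt f th m (Suc (k mod m))"
    unfolding cyc_pt_def by (simp only: mod_Suc_eq)
  have e2: "cyc_pt f th m k = cyc_pt f th m (k mod m)" unfolding cyc_pt_def by simp
  have e: "Delta1 f th m k = Delta1 f th m (k mod m)"
    unfolding Delta1_def Delta_def by (simp only: e1 e2)
  have "k mod m < m" using mpos by simp
  then have "norm (Delta1 f th m (k mod m)) = (\<Sum>l<m. norm (Delta1 f th m l)) / real m"
    using equi by blast
  then show ?thesis unfolding ell_def e .
qed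

lemma g_pos: "0 < g k" using Th_step by (simp add: g_def)

lemma g_lt1: "g k < 1"
proof -
  have "Th (Suc k) < Th (k + m)" using m2 by (intro Th_less) simp
  then show ?thesis by (simp add: g_def Th_add_m)
qed

lemma sum_g_range: "a \<le> b \<Longrightarrow> (\<Sum>j\<in>{a..<b}. g j) = Th b - Th a"
  unfolding g_def by (rule sum_Suc_diff')

lemma sum_g: "(\<Sum>k<m. g k) = 1"
  using sum_g_range[of 0 m] by (simp add: atLeast0LessThan Th_m Th_lt mpos)

lemma ell_le_g: "ell \<le> L2 * g k"
proof -
  have "ell = norm (f (Th (Suc k)) - f (Th k))" using norm_Delta1 Delta1_eq by simp
  also have "\<dots> \<le> L2 * \<bar>Th (Suc k) - Th k\<bar>" by (rule f_lip)
  also have "\<bar>Th (Suc k) - Th k\<bar> = g k" using g_pos[of k] by (simp add: g_def)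
  finally show ?thesis .
qed

lemma ell_pos: "0 < ell"
proof -
  have "circ_dist (Th (Suc 0)) (Th 0) > 0"
    using g_pos[of 0] g_lt1[of 0] by (intro circ_dist_pos) (auto simp: g_def)
  then have "L1 * circ_dist (Th (Suc 0)) (Th 0) > 0" using L1pos by simp
  also have "L1 * circ_dist (Th (Suc 0)) (Th 0) \<le> norm (f (Th (Suc 0)) - f (Th 0))" using bil by auto
  also have "\<dots> = ell" using norm_Delta1[of 0] Delta1_eq by simp
  finally show ?thesis .
qed

lemma ell_bound: "ell \<le> L2 / real m"
proof -
  have "real m * ell = (\<Sum>k<m. ell)" by simp
  also have "\<dots> \<le> (\<Sum>k<m. L2 * g k)" by (intro sum_mono ell_le_g)
  also have "\<dots> = L2" by (simp add: sum_distrib_left[symmetric] sum_g)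
  finally show ?thesis using mpos by (simp add: field_simps)
qed

lemma L2pos: "0 < L2" using L1pos L12 by simp

lemma g_ge: "ell / L2 \<le> g k" using ell_le_g[of k] L2pos by (simp add: field_simps)

lemma circ_Th_shift: "circ_dist (Th i) (Th j) = circ_dist (Th (i mod m)) (Th (j mod m))"
proof -
  have i: "Th i = Th (i mod m) + of_int (int (i div m))"
    using Th_add[of "i mod m" "i div m"] by simp
  have j: "Th j = Th (j mod m) + of_int (int (j div m))"
    using Th_add[of "j mod m" "j div m"] by simp
  have "circ_dist (Th i) (Th j) = circ_dist (Th (i mod m)) (Th (j mod m) + of_int (int (j div m)))"
    by (simp only: i circ_dist_shift) (simp only: j)
  also have "\<dots> = circ_dist (Th (j mod m) + of_int (int (j div m))) (Th (i mod m))" by (rule circ_dist_sym)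
  also have "\<dots> = circ_dist (Th (j mod m)) (Th (i mod m))" by (rule circ_dist_shift)
  also have "\<dots> = circ_dist (Th (i mod m)) (Th (j mod m))" by (rule circ_dist_sym)
  finally show ?thesis .
qed

lemma circ_Th_lower_aux: assumes "i < j" "j < m" shows "ell / L2 \<le> circ_dist (Th j) (Th i)"
proof -
  define d where "d = Th j - Th i"
  have d1: "g i \<le> d" using Th_le[of "Suc i" j] assms by (simp add: d_def g_def)
  have d2: "g j \<le> 1 - d"
    using Th_le[of "Suc j" "i + m"] assms by (simp add: d_def g_def Th_add_m)
  have "0 < d" "d < 1" using d1 d2 g_pos[of i] g_pos[of j] by linarith+
  then have "frac d = d" by (simp add: frac_eq)
  then have "circ_dist (Th j) (Th i) = min d (1 - d)" by (simp add: circ_dist_def d_def)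
  then show ?thesis using d1 d2 g_ge[of i] g_ge[of j] by simp
qed

lemma circ_Th_lower: assumes "i mod m \<noteq> j mod m" shows "ell / L2 \<le> circ_dist (Th i) (Th j)"
proof -
  have "i mod m < m" "j mod m < m" using mpos by auto
  have "ell / L2 \<le> circ_dist (Th (i mod m)) (Th (j mod m))"
  proof (cases "i mod m < j mod m")
    case True
    then show ?thesis using circ_Th_lower_aux[of "i mod m" "j mod m"] \<open>j mod m < m\<close>
      circ_dist_sym[of "Th (j mod m)" "Th (i mod m)"] by simp
  next
    case False
    then have "j mod m < i mod m" using assms by simp
    then show ?thesis using circ_Th_lower_aux[of "j mod m" "i mod m"] \<open>i mod m < m\<close> by simp
  qed
  then show ?thesis using circ_Th_shift[of i j] by simp
qed

lemma Delta_lower: assumes "i mod m \<noteq> j mod m" shows "(L1 / L2) * ell \<le> norm (Delta f th m i j)"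
proof -
  have "L1 * (ell / L2) \<le> L1 * circ_dist (Th j) (Th i)"
    using circ_Th_lower[of j i] assms L1pos by (intro mult_left_mono) auto
  also have "\<dots> \<le> norm (f (Th j) - f (Th i))" using bil by auto
  finally show ?thesis by (simp add: Delta_eq)
qed

lemma Delta_pos: assumes "i mod m \<noteq> j mod m" shows "0 < norm (Delta f th m i j)"
proof -
  have "0 < (L1 / L2) * ell" using ell_pos L1pos L2pos by simp
  then show ?thesis using Delta_lower[OF assms] by linarith
qed

end

locale poly_big = poly f L1 L2 th m for f :: "real \<Rightarrow> 'a::euclidean_space" and L1 L2 th m +
  assumes big: "L2 < (real m - 1) * L1"
begin

definition Au where "Au = 2 * Cl / L1 + Kv"
definition Bc where "Bc = 2 * Au * L2 / L1\<^sup>2 + Kv / L1"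
definition cD where "cD = 1 + 2 * L2 / L1"

lemma Au_nonneg: "0 \<le> Au" using Cl_nonneg L1pos Kv_nonneg by (simp add: Au_def)
lemma Bc_nonneg: "0 \<le> Bc" using Au_nonneg L1pos L2pos Kv_nonneg by (simp add: Bc_def)

lemma g_half: "g k \<le> 1/2"
proof (rule ccontr)
  assume "\<not> g k \<le> 1/2"
  then have gk: "1/2 < g k" by simp
  have "frac (g k) = g k" using g_pos[of k] g_lt1[of k] by (simp add: frac_eq)
  then have "circ_dist (Th (Suc k)) (Th k) = 1 - g k"
    using gk by (simp add: circ_dist_def g_def)
  then have "L1 * (1 - g k) \<le> ell"
    using bil norm_Delta1[of k] Delta1_eq[of k] by metis
  moreover have "1 - g k = (\<Sum>j\<in>{Suc k..<k+m}. g j)"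
    using sum_g_range[of "Suc k" "k + m"] m2 by (simp add: Th_add_m g_def)
  moreover have "(\<Sum>j\<in>{Suc k..<k+m}. g j) \<ge> (\<Sum>j\<in>{Suc k..<k+m}. ell / L2)"
    by (intro sum_mono g_ge)
  moreover have "(\<Sum>j\<in>{Suc k..<k+m}. ell / L2) = (real m - 1) * (ell / L2)"
    using m2 by (simp add: of_nat_diff)
  ultimately have "L1 * ((real m - 1) * (ell / L2)) \<le> ell"
    using L1pos by (smt (verit) mult_left_mono)
  then have "(real m - 1) * L1 * ell \<le> L2 * ell" using L2pos by (simp add: field_simps)
  then have "(real m - 1) * L1 \<le> L2" using ell_pos by simp
  then show False using big by simp
qed

lemma g_le: "g k \<le> ell / L1"
proof -
  have "circ_dist (Th (Suc k)) (Th k) = g k"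
    using g_half[of k] g_pos[of k] by (simp add: circ_dist_eq g_def)
  then have "L1 * g k \<le> ell" using bil norm_Delta1[of k] Delta1_eq[of k] by metis
  then show ?thesis using L1pos by (simp add: field_simps)
qed

lemma u_eq: "u k = (f (Th (Suc k)) - f (Th k)) /\<^sub>R ell"
  using norm_Delta1[of k] Delta1_eq[of k] by (simp add: u_def)

lemma u_norm: "norm (u k) = 1" using ell_pos by (simp add: u_def norm_Delta1)

lemma u_v0: "norm (u k - v (Th k)) \<le> 2 * Cl / L1 * g k"
proof -
  define w where "w = f (Th (Suc k)) - f (Th k)"
  define a where "a = w /\<^sub>R g k"
  have gp: "0 < g k" by (rule g_pos)
  have nw: "norm w = ell" using norm_Delta1[of k] Delta1_eq[of k] by (simp add: w_def)
  have "a /\<^sub>R norm a = w /\<^sub>R norm w" using gp by (simp add: a_def)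
  then have ua: "u k = a /\<^sub>R norm a" by (simp add: u_def norm_Delta1 Delta1_eq nw w_def)
  have "norm (a - D (Th k)) = norm (w - g k *\<^sub>R D (Th k)) / g k"
  proof -
    have "a - D (Th k) = (1 / g k) *\<^sub>R (w - g k *\<^sub>R D (Th k))"
      using gp by (simp add: a_def scaleR_right_diff_distrib divide_inverse)
    then show ?thesis using gp by simp
  qed
  also have "\<dots> \<le> Cl * (g k)\<^sup>2 / g k"
    using taylor[of "Th (Suc k)" "Th k"] gp by (intro divide_right_mono) (auto simp: w_def g_def)
  also have "\<dots> = Cl * g k" using gp by (simp add: power2_eq_square)
  finally have na: "norm (a - D (Th k)) \<le> Cl * g k" .
  have "norm (u k - v (Th k)) \<le> 2 * norm (a - D (Th k)) / norm (D (Th k))"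
    unfolding ua v_def by (rule unit_diff_le[OF D_nz])
  also have "\<dots> \<le> 2 * (Cl * g k) / L1"
    using na D_lower[of "Th k"] L1pos Cl_nonneg gp by (intro frac_le) auto
  finally show ?thesis by simp
qed

lemma u_v: assumes "Th k \<le> x" "x \<le> Th (Suc k)" shows "norm (u k - v x) \<le> Au * g k"
proof -
  have "norm (u k - v x) \<le> norm (u k - v (Th k)) + norm (v (Th k) - v x)"
    by (rule norm_diff_triangle_le[OF order_refl order_refl])
  also have "norm (v (Th k) - v x) \<le> Kv * g k"
    using v_lip[of "Th k" x] assms Kv_nonneg by (smt (verit) g_def mult_left_mono)
  finally show ?thesis using u_v0[of k] by (simp add: Au_def algebra_simps)
qed

lemma u_diff_gen:
  assumes "Th i \<le> x" "x \<le> Th (Suc i)" "Th j \<le> y" "y \<le> Th (Suc j)"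
  shows "norm (u i - u j) \<le> Au * (g i + g j) + (Kv / L1) * norm (f x - f y)"
proof -
  have "norm (u i - u j) \<le> norm (u i - v x) + norm (v x - v y) + norm (v y - u j)"
    by (metis norm_diff_triangle_le order_refl add_mono)
  also have "norm (v y - u j) = norm (u j - v y)" by (simp add: norm_minus_commute)
  finally show ?thesis
    using u_v[OF assms(1,2)] u_v[OF assms(3,4)] v_f[of x y] by (simp add: algebra_simps)
qed

lemma ell_le_Delta: assumes "i mod m \<noteq> j mod m" shows "ell \<le> (L2 / L1) * norm (Delta f th m i j)"
proof -
  have "(L1 / L2) * ell \<le> norm (Delta f th m i j)" by (rule Delta_lower[OF assms])
  then show ?thesis using L1pos L2pos by (simp add: field_simps)
qed

lemma u_Delta_aux:
  assumes "i mod m \<noteq> j mod m" "Th i \<le> x" "x \<le> Th (Suc i)" "Th j \<le> y" "y \<le> Th (Suc j)"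
    and "norm (f x - f y) = norm (Delta f th m i' j')" "i' mod m \<noteq> j' mod m"
  shows "norm (u i - u j) \<le> Bc * norm (Delta f th m i' j')"
proof -
  have "norm (u i - u j) \<le> Au * (g i + g j) + (Kv / L1) * norm (f x - f y)"
    by (rule u_diff_gen[OF assms(2-5)])
  also have "Au * (g i + g j) \<le> Au * (2 * (ell / L1))"
    using g_le[of i] g_le[of j] Au_nonneg by (intro mult_left_mono) auto
  also have "\<dots> \<le> Au * (2 * ((L2 / L1) * norm (Delta f th m i' j') / L1))"
  proof -
    have "ell / L1 \<le> (L2 / L1) * norm (Delta f th m i' j') / L1"
      using divide_right_mono[OF ell_le_Delta[OF assms(7)]] L1pos by simp
    then show ?thesis using Au_nonneg by (intro mult_left_mono) auto
  qed
  finally show ?thesis using assms(6) L1pos by (simp add: Bc_def algebra_simps power2_eq_square)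
qed

lemma Suc_mod_ne: assumes "i mod m \<noteq> j mod m" shows "Suc i mod m \<noteq> Suc j mod m"
proof
  assume h: "Suc i mod m = Suc j mod m"
  have "i mod m = (Suc i + (m - 1)) mod m" using mpos by simp
  also have "\<dots> = (Suc i mod m + (m - 1)) mod m" by (simp add: mod_add_left_eq)
  also have "\<dots> = (Suc j mod m + (m - 1)) mod m" by (simp only: h)
  also have "\<dots> = (Suc j + (m - 1)) mod m" by (simp add: mod_add_left_eq)
  also have "\<dots> = j mod m" using mpos by simp
  finally show False using assms by simp
qed

lemma u_Delta: assumes "i mod m \<noteq> j mod m"
  shows "norm (u i - u j) \<le> Bc * norm (Delta f th m i j)"
  using u_Delta_aux[OF assms, of "Th i" "Th j" i j] assms Th_step[of i] Th_step[of j]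
  by (simp add: Delta_eq norm_minus_commute less_imp_le)

lemma u_Delta': assumes "i mod m \<noteq> j mod m"
  shows "norm (u i - u j) \<le> Bc * norm (Delta f th m (Suc i) (Suc j))"
proof -
  have e: "norm (f (Th (Suc i)) - f (Th (Suc j))) = norm (Delta f th m (Suc i) (Suc j))"
    by (simp add: Delta_eq norm_minus_commute)
  show ?thesis
    by (rule u_Delta_aux[OF assms _ _ _ _ e Suc_mod_ne[OF assms]]) (use Th_step[of i] Th_step[of j] in auto)
qed

lemma Delta_Suc_le: assumes "i mod m \<noteq> j mod m"
  shows "norm (Delta f th m (Suc i) (Suc j)) \<le> cD * norm (Delta f th m i j)"
proof -
  have "Delta f th m (Suc i) (Suc j) = Delta f th m i j + Delta1 f th m j - Delta1 f th m i"
    by (simp add: Delta_eq Delta1_eq algebra_simps)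
  then have "norm (Delta f th m (Suc i) (Suc j)) = norm (Delta f th m i j + Delta1 f th m j - Delta1 f th m i)"
    by simp
  moreover have "norm (Delta f th m i j + Delta1 f th m j - Delta1 f th m i)
      \<le> norm (Delta f th m i j + Delta1 f th m j) + norm (Delta1 f th m i)" by (rule norm_triangle_ineq4)
  moreover have "norm (Delta f th m i j + Delta1 f th m j) \<le> norm (Delta f th m i j) + norm (Delta1 f th m j)"
    by (rule norm_triangle_ineq)
  ultimately have "norm (Delta f th m (Suc i) (Suc j)) \<le> norm (Delta f th m i j) + ell + ell"
    using norm_Delta1[of i] norm_Delta1[of j] by linarith
  also have "\<dots> \<le> norm (Delta f th m i j) + 2 * ((L2 / L1) * norm (Delta f th m i j))"
    using ell_le_Delta[OF assms] by simp
  finally show ?thesis by (simp add: cD_def algebra_simps)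
qed

lemma unit_dot: "1 - u i \<bullet> u j = (norm (u i - u j))\<^sup>2 / 2"
proof -
  have "(norm (u i - u j))\<^sup>2 = (u i - u j) \<bullet> (u i - u j)" by (simp add: power2_norm_eq_inner)
  also have "\<dots> = u i \<bullet> u i + u j \<bullet> u j - 2 * (u i \<bullet> u j)" by (simp add: inner_diff algebra_simps inner_commute)
  also have "u i \<bullet> u i = 1" using u_norm[of i] by (simp add: power2_norm_eq_inner[symmetric])
  also have "u j \<bullet> u j = 1" using u_norm[of j] by (simp add: power2_norm_eq_inner[symmetric])
  finally show ?thesis by simp
qed

lemma P1_eq: "2 * P1 f th m i j =
  ell\<^sup>2 * ((norm (u i - u j))\<^sup>2 + (norm (u (Suc i) - u (Suc j)))\<^sup>2) /
    (2 * (norm (Delta f th m i j) * norm (Delta f th m (Suc i) (Suc j))))"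
proof -
  have "2 * P1 f th m i j = (ell * ell / (norm (Delta f th m i j) * norm (Delta f th m (Suc i) (Suc j)))) *
     ((1 - u i \<bullet> u j) + (1 - u (Suc i) \<bullet> u (Suc j)))"
  proof -
    have uu: "(\<lambda>k. Delta1 f th m k /\<^sub>R norm (Delta1 f th m k)) = u" by (rule ext) (simp add: u_def)
    show ?thesis unfolding P1_def Let_def uu by (simp add: norm_Delta1)
  qed
  then show ?thesis by (simp add: unit_dot power2_eq_square field_simps)
qed

lemma P1_nonneg: "0 \<le> P1 f th m i j"
proof -
  have "0 \<le> ell\<^sup>2 * ((norm (u i - u j))\<^sup>2 + (norm (u (Suc i) - u (Suc j)))\<^sup>2) /
    (2 * (norm (Delta f th m i j) * norm (Delta f th m (Suc i) (Suc j))))" by simp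
  then show ?thesis using P1_eq[of i j] by linarith
qed

definition Mp where "Mp = Bc\<^sup>2 * (1 + cD) / 2"

lemma P1_bound: assumes "i mod m \<noteq> j mod m" shows "2 * P1 f th m i j \<le> ell\<^sup>2 * Mp"
proof -
  define d1 d2 where "d1 = norm (Delta f th m i j)" and "d2 = norm (Delta f th m (Suc i) (Suc j))"
  have d1p: "0 < d1" using Delta_pos[OF assms] by (simp add: d1_def)
  have d2p: "0 < d2" using Delta_pos[OF Suc_mod_ne[OF assms]] by (simp add: d2_def)
  have n1: "(norm (u i - u j))\<^sup>2 \<le> (Bc * d1) * (Bc * d2)"
    unfolding power2_eq_square using u_Delta[OF assms] u_Delta'[OF assms]
    using Bc_nonneg by (intro mult_mono) (auto simp: d1_def d2_def)
  have n2: "(norm (u (Suc i) - u (Suc j)))\<^sup>2 \<le> (Bc * d2) * (Bc * (cD * d1))"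
  proof -
    have a: "norm (u (Suc i) - u (Suc j)) \<le> Bc * d2" using u_Delta[OF Suc_mod_ne[OF assms]] by (simp add: d2_def)
    have b: "Bc * d2 \<le> Bc * (cD * d1)" using Delta_Suc_le[OF assms] Bc_nonneg
      by (intro mult_left_mono) (auto simp: d1_def d2_def)
    have c: "0 \<le> Bc * d2" using Bc_nonneg d2p by simp
    show ?thesis unfolding power2_eq_square using a b c by (intro mult_mono) auto
  qed
  have "(norm (u i - u j))\<^sup>2 + (norm (u (Suc i) - u (Suc j)))\<^sup>2 \<le> (Bc\<^sup>2 * (1 + cD)) * (d1 * d2)"
    using n1 n2 by (simp add: power2_eq_square algebra_simps)
  then have "((norm (u i - u j))\<^sup>2 + (norm (u (Suc i) - u (Suc j)))\<^sup>2) / (2 * (d1 * d2)) \<le> Mp"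
    using d1p d2p by (simp add: Mp_def field_simps)
  then have "ell\<^sup>2 * (((norm (u i - u j))\<^sup>2 + (norm (u (Suc i) - u (Suc j)))\<^sup>2) / (2 * (d1 * d2))) \<le> ell\<^sup>2 * Mp"
    by (intro mult_left_mono) auto
  then show ?thesis using P1_eq[of i j] by (simp add: d1_def d2_def)
qed

end

lemma measure_lborel_Times_real:
  fixes A B :: "real set"
  assumes "A \<in> sets borel" "B \<in> sets borel" "emeasure lborel A = ennreal a" "emeasure lborel B = ennreal b"
    "0 \<le> a" "0 \<le> b"
  shows "emeasure (lborel :: (real \<times> real) measure) (A \<times> B) = ennreal (a * b)"
    and "measure (lborel :: (real \<times> real) measure) (A \<times> B) = a * b"
proof -
  have "emeasure (lborel :: (real \<times> real) measure) (A \<times> B) = emeasure (lborel \<Otimes>\<^sub>M lborel) (A \<times> B)"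
    by (simp add: lborel_prod)
  also have "\<dots> = emeasure lborel A * emeasure lborel B"
    using assms by (intro lborel.emeasure_pair_measure_Times) auto
  also have "\<dots> = ennreal (a * b)" using assms by (simp add: ennreal_mult)
  finally show e: "emeasure (lborel :: (real \<times> real) measure) (A \<times> B) = ennreal (a * b)" .
  show "measure (lborel :: (real \<times> real) measure) (A \<times> B) = a * b"
    using e assms by (simp add: measure_def)
qed

context poly_big begin

definition sg where "sg k = \<phi> (Th k)"
definition h where "h k = sg (Suc k) - sg k"
definition C where "C k = (if Suc k < m then {sg k..<sg (Suc k)} else {sg k..<Lp} \<union> {0..<sg 0})"
definition cc where "cc i j = 2 * P1 f th m i j / (h i * h j)"
definition S where "S = {(i, j). i < m \<and> j < m \<and> i \<noteq> j}"
definition G where "G p = (\<Sum>(i, j)\<in>S. indicator (C i \<times> C j) p * cc i j)"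
definition Mc where "Mc = Mp * L2\<^sup>2 / L1\<^sup>2"

lemma S_finite: "finite S"
proof -
  have "S \<subseteq> {..<m} \<times> {..<m}" by (auto simp: S_def)
  then show ?thesis by (rule finite_subset) auto
qed

lemma sg_mono: "i < j \<Longrightarrow> sg i < sg j"
  unfolding sg_def using Th_less Th_nonneg arc_mono by blast

lemma sg_mono_le: "i \<le> j \<Longrightarrow> sg i \<le> sg j"
  using sg_mono[of i j] by (cases "i = j") auto

lemma sg_range: "k < m \<Longrightarrow> 0 \<le> sg k \<and> sg k < Lp"
proof -
  assume k: "k < m"
  have "0 \<le> th k" "th k < 1" using th_range[OF k] by auto
  then show ?thesis using arc_nonneg arc_mono[of "th k" 1] k by (simp add: sg_def Th_lt Lp_def)
qed

lemma sg_m: "sg m = sg 0 + Lp"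
  using arc_per[of "th 0"] th0 mpos by (simp add: sg_def Th_m Th_lt)

lemma h_ge: "L1 * g k \<le> h k"
  using arc_bounds(1)[of "Th k" "Th (Suc k)"] Th_nonneg Th_step[of k] by (simp add: h_def sg_def g_def)

lemma h_ge_ell: "L1 * (ell / L2) \<le> h k"
proof -
  have "L1 * (ell / L2) \<le> L1 * g k" using g_ge[of k] L1pos by (intro mult_left_mono) auto
  then show ?thesis using h_ge[of k] by linarith
qed

lemma h_pos: "0 < h k"
proof -
  have "0 < L1 * (ell / L2)" using L1pos ell_pos L2pos by simp
  then show ?thesis using h_ge_ell[of k] by linarith
qed

lemma ell_h: "\<bar>ell / h k - 1\<bar> \<le> 2 * Cl / L1\<^sup>2 * ell"
proof -
  define w where "w = f (Th (Suc k)) - f (Th k)"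
  have gp: "0 < g k" by (rule g_pos)
  have nw: "norm w = ell" using norm_Delta1[of k] Delta1_eq[of k] by (simp add: w_def)
  have "\<bar>norm w - norm (g k *\<^sub>R D (Th k))\<bar> \<le> norm (w - g k *\<^sub>R D (Th k))" by (rule norm_triangle_ineq3)
  also have "\<dots> \<le> Cl * (g k)\<^sup>2" using taylor[of "Th (Suc k)" "Th k"] by (simp add: w_def g_def)
  finally have e1: "\<bar>ell - g k * nD (Th k)\<bar> \<le> Cl * (g k)\<^sup>2" using gp nw by (simp add: nD_def)
  have e2: "\<bar>h k - g k * nD (Th k)\<bar> \<le> Cl * (g k)\<^sup>2"
    using arc_taylor[of "Th k" "Th (Suc k)"] Th_nonneg Th_step[of k] by (simp add: h_def sg_def g_def)
  have "\<bar>ell - h k\<bar> \<le> 2 * Cl * (g k)\<^sup>2" using e1 e2 by linarith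
  moreover have "ell / h k - 1 = (ell - h k) / h k" using h_pos[of k] by (simp add: field_simps)
  moreover have "\<bar>(ell - h k) / h k\<bar> = \<bar>ell - h k\<bar> / h k" using h_pos[of k] by simp
  ultimately have "\<bar>ell / h k - 1\<bar> \<le> 2 * Cl * (g k)\<^sup>2 / h k"
    using h_pos[of k] by (metis divide_right_mono less_imp_le)
  also have "\<dots> \<le> 2 * Cl * (g k)\<^sup>2 / (L1 * g k)"
    using h_ge[of k] h_pos[of k] gp L1pos Cl_nonneg by (intro divide_left_mono) auto
  also have "\<dots> = 2 * Cl * g k / L1" using gp L1pos by (simp add: power2_eq_square)
  also have "\<dots> \<le> 2 * Cl * (ell / L1) / L1"
    using g_le[of k] Cl_nonneg L1pos by (intro divide_right_mono mult_left_mono) auto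
  finally show ?thesis by (simp add: power2_eq_square)
qed

lemma mem_C: assumes "k < m"
  shows "a \<in> C k \<longleftrightarrow> a \<in> {0..<Lp} \<and> (sg k \<le> a \<and> a < sg (Suc k) \<or> sg k \<le> a + Lp \<and> a + Lp < sg (Suc k))"
proof (cases "Suc k < m")
  case True
  have "sg (Suc k) < Lp" using sg_range[OF True] by simp
  moreover have "0 \<le> sg k" using sg_range assms by simp
  ultimately show ?thesis using True by (auto simp: C_def)
next
  case False
  then have k: "Suc k = m" using assms by simp
  have "0 \<le> sg 0" "sg k < Lp" using sg_range assms mpos by auto
  moreover have "sg 0 \<le> sg k" using sg_mono_le by simp
  moreover have "sg (Suc k) = sg 0 + Lp" using k sg_m by simp
  ultimately show ?thesis using False by (auto simp: C_def)
qed

lemma C_sub: "k < m \<Longrightarrow> C k \<subseteq> {0..<Lp}" using mem_C by blast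

lemma C_unique: assumes "i < m" "j < m" "a \<in> C i" "a \<in> C j" shows "i = j"
proof -
  have sgm: "sg (Suc k) \<le> sg 0 + Lp" if "k < m" for k
    using sg_mono_le[of "Suc k" m] that sg_m by simp
  have uq: "i = j" if "sg i \<le> x" "x < sg (Suc i)" "sg j \<le> x" "x < sg (Suc j)" for x
  proof (rule ccontr)
    assume "i \<noteq> j"
    then consider "i < j" | "j < i" by linarith
    then show False
    proof cases
      case 1 then show False using sg_mono_le[of "Suc i" j] that by simp
    next
      case 2 then show False using sg_mono_le[of "Suc j" i] that by simp
    qed
  qed
  have ai: "a \<in> {0..<Lp}" "sg i \<le> a \<and> a < sg (Suc i) \<or> sg i \<le> a + Lp \<and> a + Lp < sg (Suc i)"
    using mem_C[OF assms(1)] assms(3) by auto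
  have aj: "sg j \<le> a \<and> a < sg (Suc j) \<or> sg j \<le> a + Lp \<and> a + Lp < sg (Suc j)"
    using mem_C[OF assms(2)] assms(4) by auto
  have "sg 0 \<le> sg i" "sg 0 \<le> sg j" using sg_mono_le by auto
  then show ?thesis using ai aj uq sgm[OF assms(1)] sgm[OF assms(2)] by auto
qed

lemma C_disj: "i < m \<Longrightarrow> j < m \<Longrightarrow> i \<noteq> j \<Longrightarrow> C i \<inter> C j = {}"
  using C_unique by blast

lemma C_cover: assumes "a \<in> {0..<Lp}" shows "\<exists>k<m. a \<in> C k"
proof (cases "a < sg 0")
  case True
  have "sg (m - 1) < Lp" using sg_range[of "m - 1"] mpos by simp
  moreover have "Suc (m - 1) = m" using mpos by simp
  ultimately have "a \<in> C (m - 1)"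
    using True assms sg_m mem_C[of "m - 1"] mpos by auto
  then show ?thesis using mpos by (intro exI[of _ "m - 1"]) auto
next
  case False
  define K where "K = {k. k < m \<and> sg k \<le> a}"
  have fin: "finite K" by (simp add: K_def)
  have ne: "0 \<in> K" using False mpos by (simp add: K_def)
  define k where "k = Max K"
  have kK: "k \<in> K" using Max_in[OF fin] ne by (auto simp: k_def)
  then have km: "k < m" and sgk: "sg k \<le> a" by (auto simp: K_def)
  have "a < sg (Suc k)"
  proof (cases "Suc k < m")
    case True
    have "Suc k \<notin> K" using fin k_def by (metis Max_ge Suc_n_not_le_n)
    then show ?thesis using True by (auto simp: K_def)
  next
    case False
    then have "Suc k = m" using km by simp
    then show ?thesis using sg_m assms sg_range[of 0] mpos by auto
  qed
  then have "a \<in> C k" using mem_C[OF km] assms sgk by auto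
  then show ?thesis using km by blast
qed

lemma C_cell: assumes "k < m" "a \<in> C k"
  shows "\<exists>t. (t = \<psi> a \<or> t = \<psi> a + 1) \<and> Th k \<le> t \<and> t < Th (Suc k)"
proof -
  have a: "a \<in> {0..<Lp}" using mem_C[OF assms(1)] assms(2) by auto
  then have pa: "\<psi> a \<in> {0..1}" "\<phi> (\<psi> a) = a" using psi_in arc_psi by auto
  have pa1: "\<phi> (\<psi> a + 1) = a + Lp" using arc_per[of "\<psi> a"] pa by simp
  have nn: "0 \<le> Th k" "0 \<le> Th (Suc k)" by (rule Th_nonneg)+
  consider "sg k \<le> a \<and> a < sg (Suc k)" | "sg k \<le> a + Lp \<and> a + Lp < sg (Suc k)"
    using mem_C[OF assms(1)] assms(2) by auto
  then show ?thesis
  proof cases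
    case 1
    then have "Th k \<le> \<psi> a" "\<psi> a < Th (Suc k)"
      using arc_mono_le_iff[of "Th k" "\<psi> a"] arc_mono_iff[of "\<psi> a" "Th (Suc k)"] pa nn
      by (auto simp: sg_def)
    then show ?thesis by blast
  next
    case 2
    then have "Th k \<le> \<psi> a + 1" "\<psi> a + 1 < Th (Suc k)"
      using arc_mono_le_iff[of "Th k" "\<psi> a + 1"] arc_mono_iff[of "\<psi> a + 1" "Th (Suc k)"] pa pa1 nn
      by (auto simp: sg_def)
    then show ?thesis by blast
  qed
qed

lemma G_eval: assumes "i < m" "j < m" "a \<in> C i" "b \<in> C j"
  shows "G (a, b) = (if i \<noteq> j then cc i j else 0)"
proof -
  have "G (a, b) = (\<Sum>p\<in>S. if p = (i, j) then cc i j else 0)"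
    unfolding G_def
  proof (intro sum.cong refl)
    fix p assume "p \<in> S"
    then obtain i' j' where p: "p = (i', j')" "i' < m" "j' < m" by (auto simp: S_def)
    have "a \<in> C i' \<longleftrightarrow> i' = i" using C_unique[OF p(2) assms(1) _ assms(3)] assms(3) by auto
    moreover have "b \<in> C j' \<longleftrightarrow> j' = j" using C_unique[OF p(3) assms(2) _ assms(4)] assms(4) by auto
    ultimately show "(case p of (i, j) \<Rightarrow> indicator (C i \<times> C j) (a, b) * cc i j) =
        (if p = (i, j) then cc i j else 0)" using p by (auto simp: indicator_def)
  qed
  also have "\<dots> = (if (i, j) \<in> S then cc i j else 0)"
    using S_finite by (simp add: sum.delta')
  finally show ?thesis using assms by (simp add: S_def)
qed

lemma G_out: assumes "a \<notin> {0..<Lp} \<or> b \<notin> {0..<Lp}" shows "G (a, b) = 0"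
proof -
  have "indicator (C i \<times> C j) (a, b) = (0::real)" if "(i, j) \<in> S" for i j
    using that C_sub[of i] C_sub[of j] assms by (auto simp: S_def indicator_def)
  then show ?thesis unfolding G_def by (intro sum.neutral) auto
qed

lemma cc_bound: assumes "i < m" "j < m" "i \<noteq> j" shows "0 \<le> cc i j \<and> cc i j \<le> Mc"
proof
  show "0 \<le> cc i j" unfolding cc_def using P1_nonneg[of i j] h_pos[of i] h_pos[of j]
    by (intro divide_nonneg_pos mult_pos_pos) auto
  have hh: "(L1 * (ell / L2)) * (L1 * (ell / L2)) \<le> h i * h j"
    using h_ge_ell[of i] h_ge_ell[of j] L1pos ell_pos L2pos h_pos[of i] by (intro mult_mono) auto
  have pos: "0 < (L1 * (ell / L2)) * (L1 * (ell / L2))" using L1pos ell_pos L2pos by simp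
  have "i mod m \<noteq> j mod m" using assms by simp
  then have "2 * P1 f th m i j \<le> ell\<^sup>2 * Mp" by (rule P1_bound)
  then have "cc i j \<le> ell\<^sup>2 * Mp / (h i * h j)"
    using h_pos[of i] h_pos[of j] unfolding cc_def by (intro divide_right_mono) auto
  also have "\<dots> \<le> ell\<^sup>2 * Mp / ((L1 * (ell / L2)) * (L1 * (ell / L2)))"
  proof (rule frac_le[OF _ order_refl pos hh])
    have "0 \<le> cD" using L1pos L2pos by (simp add: cD_def)
    then have "0 \<le> Mp" by (simp add: Mp_def)
    then show "0 \<le> ell\<^sup>2 * Mp" by simp
  qed
  also have "\<dots> = Mc" using ell_pos L1pos L2pos by (simp add: Mc_def power2_eq_square field_simps)
  finally show "cc i j \<le> Mc" .
qed

lemma G_bound: "0 \<le> G p \<and> G p \<le> Mc"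
proof -
  obtain a b where p: "p = (a, b)" by fastforce
  have Mc_nn: "0 \<le> Mc" using cc_bound[of 0 1] m2 by fastforce
  show ?thesis
  proof (cases "a \<in> {0..<Lp} \<and> b \<in> {0..<Lp}")
    case True
    then obtain i j where "i < m" "j < m" "a \<in> C i" "b \<in> C j" using C_cover by meson
    then show ?thesis using G_eval cc_bound Mc_nn p by auto
  next
    case False
    then show ?thesis using G_out Mc_nn p by auto
  qed
qed

lemma C_sets: "C k \<in> sets borel" by (simp add: C_def)

lemma C_emeasure: assumes "k < m" shows "emeasure lborel (C k) = ennreal (h k)"
proof (cases "Suc k < m")
  case True
  have "sg k \<le> sg (Suc k)" by (rule sg_mono_le) simp
  then have "emeasure lborel {sg k..<sg (Suc k)} = ennreal (h k)"
    unfolding h_def by (rule emeasure_lborel_Ico)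
  then show ?thesis using True by (simp add: C_def)
next
  case False
  then have k: "Suc k = m" using assms by simp
  have r: "0 \<le> sg 0" "sg 0 \<le> sg k" "sg k < Lp" using sg_range[of 0] sg_range[of k] assms mpos sg_mono_le[of 0 k] by auto
  have "emeasure lborel ({sg k..<Lp} \<union> {0..<sg 0}) = emeasure lborel {sg k..<Lp} + emeasure lborel {0..<sg 0}"
    using r by (intro plus_emeasure[symmetric]) auto
  also have "emeasure lborel {sg k..<Lp} = ennreal (Lp - sg k)" using r by (intro emeasure_lborel_Ico) simp
  also have "emeasure lborel {0..<sg 0} = ennreal (sg 0 - 0)" using r by (intro emeasure_lborel_Ico) simp
  also have "ennreal (Lp - sg k) + ennreal (sg 0 - 0) = ennreal (Lp - sg k + sg 0)"
    using r by (subst ennreal_plus) auto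
  also have "Lp - sg k + sg 0 = h k" using k sg_m by (simp add: h_def)
  finally show ?thesis using False by (simp add: C_def)
qed

lemma G_meas: "G \<in> borel_measurable lborel"
proof -
  have "(\<lambda>p. indicator (C i \<times> C j) p * cc i j) \<in> borel_measurable lborel" for i j
  proof -
    have "C i \<times> C j \<in> sets (lborel :: (real \<times> real) measure)"
      using C_sets by (simp add: borel_prod[symmetric])
    then show ?thesis by (intro borel_measurable_times borel_measurable_indicator) auto
  qed
  then show ?thesis unfolding G_def by (auto simp: case_prod_unfold intro!: borel_measurable_sum)
qed

lemma G_integral:
  "integral\<^sup>L lborel (\<lambda>p. indicator ({0..Lp} \<times> {0..Lp}) p *\<^sub>R G p) = 2 * disc_E1 f th m"
proof -
  have eq: "indicator ({0..Lp} \<times> {0..Lp}) p *\<^sub>R G p = G p" for p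
  proof (cases "p \<in> {0..Lp} \<times> {0..Lp}")
    case False
    obtain a b where "p = (a, b)" by fastforce
    then show ?thesis using False G_out by auto
  qed simp
  have int: "integrable lborel (\<lambda>p. indicator (C i \<times> C j) p * cc i j)" if "(i, j) \<in> S" for i j
  proof -
    have "emeasure (lborel :: (real \<times> real) measure) (C i \<times> C j) = ennreal (h i * h j)"
      using that C_sets C_emeasure h_pos by (intro measure_lborel_Times_real(1)) (auto simp: S_def less_imp_le)
    moreover have "C i \<times> C j \<in> sets (lborel :: (real \<times> real) measure)"
      using C_sets by (simp add: borel_prod[symmetric])
    ultimately show ?thesis by (intro integrable_mult_left integrable_real_indicator) auto
  qed
  have "integral\<^sup>L lborel G = (\<Sum>(i, j)\<in>S. integral\<^sup>L lborel (\<lambda>p. indicator (C i \<times> C j) p * cc i j))"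
    unfolding G_def case_prod_unfold
  proof (rule Bochner_Integration.integral_sum)
    fix pa assume "pa \<in> S"
    then show "integrable lborel (\<lambda>p. indicator (C (fst pa) \<times> C (snd pa)) p * cc (fst pa) (snd pa))"
      using int[of "fst pa" "snd pa"] by simp
  qed
  also have "\<dots> = (\<Sum>(i, j)\<in>S. 2 * P1 f th m i j)"
  proof (intro sum.cong refl, clarify)
    fix i j assume ij: "(i, j) \<in> S"
    have "measure (lborel :: (real \<times> real) measure) (C i \<times> C j) = h i * h j"
      using ij C_sets C_emeasure h_pos by (intro measure_lborel_Times_real(2)) (auto simp: S_def less_imp_le)
    moreover have "C i \<times> C j \<in> sets (lborel :: (real \<times> real) measure)"
      using C_sets by (simp add: borel_prod[symmetric])
    ultimately show "integral\<^sup>L lborel (\<lambda>p. indicator (C i \<times> C j) p * cc i j) = 2 * P1 f th m i j"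
      using h_pos[of i] h_pos[of j] by (simp add: cc_def)
  qed
  also have "\<dots> = 2 * disc_E1 f th m"
    by (simp add: disc_E1_def S_def sum_distrib_left case_prod_unfold)
  finally have r: "integral\<^sup>L lborel G = 2 * disc_E1 f th m" .
  have feq: "(\<lambda>p. indicator ({0..Lp} \<times> {0..Lp}) p *\<^sub>R G p) = G" using eq by (intro ext)
  show ?thesis unfolding feq by (rule r)
qed

end

lemma hyperplane_null:
  fixes a :: "'b::euclidean_space"
  assumes "a \<noteq> 0" shows "{x. a \<bullet> x = b} \<in> null_sets lborel"
proof -
  have "negligible {x. a \<bullet> x = b}" using assms by (intro negligible_hyperplane) auto
  then have "{x. a \<bullet> x = b} \<in> null_sets lebesgue" by (simp add: negligible_iff_null_sets)
  moreover have "{x. a \<bullet> x = b} \<in> sets borel" using closed_hyperplane by (rule borel_closed)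
  ultimately show ?thesis using null_sets_completion_iff by (metis sets_lborel)
qed

lemma tendsto_bound_seq:
  fixes X :: "nat \<Rightarrow> 'b::real_normed_vector"
  assumes "\<And>n. norm (X n - x) \<le> c * r n" "r \<longlonglongrightarrow> 0"
  shows "X \<longlonglongrightarrow> x"
proof -
  have "(\<lambda>n. c * r n) \<longlonglongrightarrow> 0" using tendsto_mult_right_zero[OF assms(2)] by simp
  moreover have ev: "eventually (\<lambda>n. norm (X n - x) \<le> c * r n) sequentially"
    using assms(1) by (intro always_eventually allI)
  ultimately have "(\<lambda>n. X n - x) \<longlonglongrightarrow> 0"
    using Lim_null_comparison[OF ev] by blast
  then show ?thesis by (simp add: LIM_zero_iff)
qed

context curve begin
definition Ec where "Ec = (2 * (2 * Cl / L1 + Kv) + L2 + 2 * Cl / L1) / L1"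
end

context poly_big begin

lemma Ec_eq: "Ec = (2 * Au + L2 + 2 * Cl / L1) / L1" by (simp add: Ec_def Au_def)

lemma cell_approx: assumes "k < m" "a \<in> C k"
  shows "norm (u k - v (\<psi> a)) \<le> Ec * ell" "norm (u (Suc k) - v (\<psi> a)) \<le> Ec * ell"
    "norm (f (Th k) - f (\<psi> a)) \<le> Ec * ell" "norm (f (Th (Suc k)) - f (\<psi> a)) \<le> Ec * ell"
    "\<bar>ell / h k - 1\<bar> \<le> Ec * ell"
proof -
  obtain t where t: "t = \<psi> a \<or> t = \<psi> a + 1" "Th k \<le> t" "t < Th (Suc k)"
    using C_cell[OF assms] by blast
  have v1: "v (\<psi> a + 1) = v (\<psi> a)" using v_per_int[of "\<psi> a" 1] by simp
  have vt: "v t = v (\<psi> a)" using t(1) v1 by (elim disjE) simp_all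
  have ft: "f t = f (\<psi> a)" using t(1) per[of "\<psi> a"] by (elim disjE) simp_all
  have gk: "g k \<le> ell / L1" by (rule g_le)
  have gk1: "g (Suc k) \<le> ell / L1" by (rule g_le)
  have d1: "\<bar>Th k - t\<bar> \<le> g k" "\<bar>Th (Suc k) - t\<bar> \<le> g k" unfolding g_def using t(2,3) by linarith+
  have L1p: "0 < L1" by (rule L1pos)
  have Aun: "0 \<le> Au" by (rule Au_nonneg)
  have Kvn: "0 \<le> Kv" by (rule Kv_nonneg)
  have Cln: "0 \<le> Cl" by (rule Cl_nonneg)
  have elp: "0 < ell" by (rule ell_pos)
  have KvAu: "Kv \<le> Au" using Cln L1p by (simp add: Au_def)
  have EL: "Ec * L1 = 2 * Au + L2 + 2 * Cl / L1" using L1p unfolding Ec_eq by simp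
  have base: "c \<le> Ec * L1" if "c \<le> 2 * Au + L2 + 2 * Cl / L1" for c
    using that EL by linarith
  have fin: "c * (ell / L1) \<le> Ec * ell" if "c \<le> 2 * Au + L2 + 2 * Cl / L1" for c
  proof -
    have "c * (ell / L1) = (c / L1) * ell" by simp
    also have "c / L1 \<le> Ec" using base[OF that] L1p by (simp add: pos_divide_le_eq)
    then have "(c / L1) * ell \<le> Ec * ell" using elp by (intro mult_right_mono) auto
    finally show ?thesis .
  qed
  have L2n: "0 \<le> L2" using L2pos by simp
  show "norm (u k - v (\<psi> a)) \<le> Ec * ell"
  proof -
    have "norm (u k - v t) \<le> Au * g k" using u_v[of k t] t by auto
    also have "\<dots> \<le> Au * (ell / L1)" using gk Aun by (intro mult_left_mono) auto
    also have "\<dots> \<le> Ec * ell" using Aun L2n Cln L1p by (intro fin) auto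
    finally show ?thesis using vt by simp
  qed
  show "norm (u (Suc k) - v (\<psi> a)) \<le> Ec * ell"
  proof -
    have "norm (u (Suc k) - v t) \<le> norm (u (Suc k) - v (Th (Suc k))) + norm (v (Th (Suc k)) - v t)"
      by (rule norm_diff_triangle_le[OF order_refl order_refl])
    also have "norm (u (Suc k) - v (Th (Suc k))) \<le> Au * g (Suc k)"
      using u_v[of "Suc k" "Th (Suc k)"] Th_step[of "Suc k"] by auto
    also have "norm (v (Th (Suc k)) - v t) \<le> Kv * g k"
    proof -
      have "Kv * \<bar>Th (Suc k) - t\<bar> \<le> Kv * g k" using d1(2) Kvn by (rule mult_left_mono)
      then show ?thesis using v_lip[of "Th (Suc k)" t] by linarith
    qed
    also have "Au * g (Suc k) + Kv * g k \<le> Au * (ell / L1) + Au * (ell / L1)"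
      using gk gk1 Aun Kvn KvAu g_pos[of k] g_pos[of "Suc k"] by (intro add_mono mult_mono) auto
    also have "\<dots> = (2 * Au) * (ell / L1)" by simp
    also have "\<dots> \<le> Ec * ell" using L2n Cln L1p by (intro fin) auto
    finally show ?thesis using vt by simp
  qed
  show "norm (f (Th k) - f (\<psi> a)) \<le> Ec * ell"
  proof -
    have "norm (f (Th k) - f t) \<le> L2 * \<bar>Th k - t\<bar>" by (rule f_lip)
    also have "\<dots> \<le> L2 * (ell / L1)"
    proof -
      have "L2 * \<bar>Th k - t\<bar> \<le> L2 * g k" using d1(1) L2n by (rule mult_left_mono)
      also have "\<dots> \<le> L2 * (ell / L1)" using gk L2n by (rule mult_left_mono)
      finally show ?thesis .
    qed
    also have "\<dots> \<le> Ec * ell" using Aun Cln L1p by (intro fin) auto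
    finally show ?thesis using ft by simp
  qed
  show "norm (f (Th (Suc k)) - f (\<psi> a)) \<le> Ec * ell"
  proof -
    have "norm (f (Th (Suc k)) - f t) \<le> L2 * \<bar>Th (Suc k) - t\<bar>" by (rule f_lip)
    also have "\<dots> \<le> L2 * (ell / L1)"
    proof -
      have "L2 * \<bar>Th (Suc k) - t\<bar> \<le> L2 * g k" using d1(2) L2n by (rule mult_left_mono)
      also have "\<dots> \<le> L2 * (ell / L1)" using gk L2n by (rule mult_left_mono)
      finally show ?thesis .
    qed
    also have "\<dots> \<le> Ec * ell" using Aun Cln L1p by (intro fin) auto
    finally show ?thesis using ft by simp
  qed
  show "\<bar>ell / h k - 1\<bar> \<le> Ec * ell"
  proof -
    have "\<bar>ell / h k - 1\<bar> \<le> 2 * Cl / L1\<^sup>2 * ell" by (rule ell_h)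
    also have "2 * Cl / L1\<^sup>2 * ell = (2 * Cl / L1) * (ell / L1)" by (simp add: power2_eq_square)
    also have "\<dots> \<le> Ec * ell" using Aun L2n L1p Cln by (intro fin) auto
    finally show ?thesis .
  qed
qed

lemma G_formula: assumes "k < m" "k' < m" "a \<in> C k" "b \<in> C k'" "k \<noteq> k'"
  shows "G (a, b) = (ell / h k) * (ell / h k') *
    ((norm (u k - u k'))\<^sup>2 + (norm (u (Suc k) - u (Suc k')))\<^sup>2) /
    (2 * (norm (f (Th k') - f (Th k)) * norm (f (Th (Suc k')) - f (Th (Suc k)))))"
proof -
  have "G (a, b) = cc k k'" using G_eval[OF assms(1-4)] assms(5) by simp
  also have "\<dots> = 2 * P1 f th m k k' / (h k * h k')" by (simp add: cc_def)
  also have "2 * P1 f th m k k' = ell\<^sup>2 * ((norm (u k - u k'))\<^sup>2 + (norm (u (Suc k) - u (Suc k')))\<^sup>2) /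
    (2 * (norm (f (Th k') - f (Th k)) * norm (f (Th (Suc k')) - f (Th (Suc k)))))"
    using P1_eq[of k k'] by (simp add: Delta_eq)
  finally show ?thesis using h_pos[of k] h_pos[of k'] by (simp add: power2_eq_square field_simps)
qed

end

context curve begin

lemma v_cont: "continuous_on S v"
proof -
  have "continuous_on S (\<lambda>x. inverse (norm (D x)) *\<^sub>R D x)"
    using D_cont D_nz by (intro continuous_intros continuous_on_subset[OF D_cont]) auto
  then show ?thesis by (simp add: v_def[abs_def] divide_inverse_commute)
qed

lemma F_meas:
  "(\<lambda>p. indicator ({0..Lp} \<times> {0..Lp}) p *\<^sub>R
     ((norm (vector_derivative (arclen_param f) (at (fst p)) - vector_derivative (arclen_param f) (at (snd p))))\<^sup>2 /
      (norm (arclen_param f (fst p) - arclen_param f (snd p)))\<^sup>2)) \<in> borel_measurable lborel"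
  (is "?F \<in> _")
proof -
  define \<tau> where "\<tau> x = vector_derivative (arclen_param f) (at x)" for x
  define \<tau>' where "\<tau>' x = indicator {0<..<Lp} x *\<^sub>R v (\<psi> x) + indicator {0} x *\<^sub>R \<tau> 0 + indicator {Lp} x *\<^sub>R \<tau> Lp" for x
  define \<gamma>' where "\<gamma>' x = indicator {0..Lp} x *\<^sub>R f (\<psi> x)" for x
  have c1: "continuous_on {0<..<Lp} (\<lambda>x. v (\<psi> x))"
    by (rule continuous_on_compose2[OF v_cont continuous_on_subset[OF psi_cont]]) auto
  have c2: "continuous_on {0..Lp} (\<lambda>x. f (\<psi> x))"
    by (rule continuous_on_compose2[OF f_cont psi_cont]) auto
  have m1: "(\<lambda>x. indicator {0<..<Lp} x *\<^sub>R v (\<psi> x)) \<in> borel_measurable borel"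
    by (rule borel_measurable_continuous_on_indicator[OF _ c1]) auto
  have m2: "\<gamma>' \<in> borel_measurable borel"
    unfolding \<gamma>'_def by (rule borel_measurable_continuous_on_indicator[OF _ c2]) auto
  have m3: "\<tau>' \<in> borel_measurable borel"
    unfolding \<tau>'_def using m1 by measurable
  have eq_tau: "\<tau>' x = \<tau> x" if xin: "x \<in> {0..Lp}" for x
  proof -
    have "Lp \<noteq> 0" using Lp_pos by simp
    then consider "x = 0" | "x = Lp" | "x \<in> {0<..<Lp}" using xin by fastforce
    then show ?thesis
    proof cases
      case 1 then show ?thesis using Lp_pos by (simp add: \<tau>'_def)
    next
      case 2 then show ?thesis using Lp_pos by (simp add: \<tau>'_def)
    next
      case 3 then show ?thesis using tau_eq[OF 3] by (simp add: \<tau>'_def \<tau>_def)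
    qed
  qed
  have eq_gamma: "\<gamma>' x = arclen_param f x" if "x \<in> {0..Lp}" for x
    using that gamma_eq[OF that] by (simp add: \<gamma>'_def)
  define F' where "F' p = indicator ({0..Lp} \<times> {0..Lp}) p *\<^sub>R
     ((norm (\<tau>' (fst p) - \<tau>' (snd p)))\<^sup>2 / (norm (\<gamma>' (fst p) - \<gamma>' (snd p)))\<^sup>2)" for p
  have H: "(\<lambda>p. (norm (\<tau>' (fst p) - \<tau>' (snd p)))\<^sup>2 / (norm (\<gamma>' (fst p) - \<gamma>' (snd p)))\<^sup>2)
     \<in> borel_measurable (borel \<Otimes>\<^sub>M borel)" using m2 m3 by measurable
  have H': "(\<lambda>p. (norm (\<tau>' (fst p) - \<tau>' (snd p)))\<^sup>2 / (norm (\<gamma>' (fst p) - \<gamma>' (snd p)))\<^sup>2)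
     \<in> borel_measurable lborel"
    using H by (simp add: borel_prod measurable_cong_sets[OF sets_lborel refl])
  have Ameas: "{0..Lp} \<times> {0..Lp} \<in> sets (lborel :: (real \<times> real) measure)"
    by (simp add: borel_prod[symmetric])
  have "F' \<in> borel_measurable lborel"
    unfolding F'_def by (intro borel_measurable_scaleR borel_measurable_indicator Ameas H')
  moreover have "?F = F'"
  proof
    fix p :: "real \<times> real"
    show "?F p = F' p"
    proof (cases "p \<in> {0..Lp} \<times> {0..Lp}")
      case True
      then have "fst p \<in> {0..Lp}" "snd p \<in> {0..Lp}" by auto
      then show ?thesis using eq_tau eq_gamma by (simp add: F'_def \<tau>_def)
    next
      case False
      then show ?thesis by (simp add: F'_def)
    qed
  qed
  ultimately show ?thesis by simp
qed


lemma pointwise: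
  fixes th :: "nat \<Rightarrow> nat \<Rightarrow> real" and M :: "nat \<Rightarrow> nat"
  assumes PB: "\<And>n. poly_big f L1 L2 (th n) (M n)"
    and Mlim: "(\<lambda>n. L2 / real (M n)) \<longlonglongrightarrow> 0"
    and a: "a \<in> {0<..<Lp}" and b: "b \<in> {0<..<Lp}" and ab: "a \<noteq> b"
  shows "(\<lambda>n. poly_big.G f (th n) (M n) (a, b)) \<longlonglongrightarrow>
    (norm (v (\<psi> a) - v (\<psi> b)))\<^sup>2 / (norm (f (\<psi> a) - f (\<psi> b)))\<^sup>2"
proof -
  have P: "poly f L1 L2 (th n) (M n)" for n using PB[of n] by (simp add: poly_big_def)
  define el where "el n = poly.ell f (th n) (M n)" for n
  define k where "k n = (SOME k. k < M n \<and> a \<in> poly_big.C f (th n) (M n) k)" for n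
  define k' where "k' n = (SOME k. k < M n \<and> b \<in> poly_big.C f (th n) (M n) k)" for n
  have k: "k n < M n \<and> a \<in> poly_big.C f (th n) (M n) (k n)" for n
    unfolding k_def by (rule someI_ex) (use poly_big.C_cover[OF PB[of n], of a] a in auto)
  have k': "k' n < M n \<and> b \<in> poly_big.C f (th n) (M n) (k' n)" for n
    unfolding k'_def by (rule someI_ex) (use poly_big.C_cover[OF PB[of n], of b] b in auto)
  have el_nn: "0 \<le> el n" for n using poly.ell_pos[OF P[of n]] by (simp add: el_def)
  have el_le: "el n \<le> L2 / real (M n)" for n using poly.ell_bound[OF P[of n]] by (simp add: el_def)
  have el_lim: "el \<longlonglongrightarrow> 0"
    by (rule tendsto_sandwich[OF _ _ tendsto_const Mlim]) (use el_nn el_le in auto)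
  note CA = poly_big.cell_approx[OF PB]
  define U1 where "U1 n = poly.u f (th n) (M n) (k n)" for n
  define U2 where "U2 n = poly.u f (th n) (M n) (Suc (k n))" for n
  define W1 where "W1 n = poly.u f (th n) (M n) (k' n)" for n
  define W2 where "W2 n = poly.u f (th n) (M n) (Suc (k' n))" for n
  define P1' where "P1' n = f (poly.Th (th n) (M n) (k n))" for n
  define P2' where "P2' n = f (poly.Th (th n) (M n) (Suc (k n)))" for n
  define Q1 where "Q1 n = f (poly.Th (th n) (M n) (k' n))" for n
  define Q2 where "Q2 n = f (poly.Th (th n) (M n) (Suc (k' n)))" for n
  define x1 where "x1 n = el n / poly_big.h f (th n) (M n) (k n)" for n
  define x2 where "x2 n = el n / poly_big.h f (th n) (M n) (k' n)" for n
  have lU1: "U1 \<longlonglongrightarrow> v (\<psi> a)"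
  proof (rule tendsto_bound_seq[where c=Ec and r=el, OF _ el_lim])
    fix n
    show "norm (U1 n - v (\<psi> a)) \<le> Ec * el n"
      using poly_big.cell_approx(1)[OF PB[of n] k[of n, THEN conjunct1] k[of n, THEN conjunct2]]
      by (simp add: U1_def el_def)
  qed
  have lU2: "U2 \<longlonglongrightarrow> v (\<psi> a)"
  proof (rule tendsto_bound_seq[where c=Ec and r=el, OF _ el_lim])
    fix n
    show "norm (U2 n - v (\<psi> a)) \<le> Ec * el n"
      using poly_big.cell_approx(2)[OF PB[of n] k[of n, THEN conjunct1] k[of n, THEN conjunct2]]
      by (simp add: U2_def el_def)
  qed
  have lW1: "W1 \<longlonglongrightarrow> v (\<psi> b)"
  proof (rule tendsto_bound_seq[where c=Ec and r=el, OF _ el_lim])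
    fix n
    show "norm (W1 n - v (\<psi> b)) \<le> Ec * el n"
      using poly_big.cell_approx(1)[OF PB[of n] k'[of n, THEN conjunct1] k'[of n, THEN conjunct2]]
      by (simp add: W1_def el_def)
  qed
  have lW2: "W2 \<longlonglongrightarrow> v (\<psi> b)"
  proof (rule tendsto_bound_seq[where c=Ec and r=el, OF _ el_lim])
    fix n
    show "norm (W2 n - v (\<psi> b)) \<le> Ec * el n"
      using poly_big.cell_approx(2)[OF PB[of n] k'[of n, THEN conjunct1] k'[of n, THEN conjunct2]]
      by (simp add: W2_def el_def)
  qed
  have lP1: "P1' \<longlonglongrightarrow> f (\<psi> a)"
  proof (rule tendsto_bound_seq[where c=Ec and r=el, OF _ el_lim])
    fix n
    show "norm (P1' n - f (\<psi> a)) \<le> Ec * el n"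
      using poly_big.cell_approx(3)[OF PB[of n] k[of n, THEN conjunct1] k[of n, THEN conjunct2]]
      by (simp add: P1'_def el_def)
  qed
  have lP2: "P2' \<longlonglongrightarrow> f (\<psi> a)"
  proof (rule tendsto_bound_seq[where c=Ec and r=el, OF _ el_lim])
    fix n
    show "norm (P2' n - f (\<psi> a)) \<le> Ec * el n"
      using poly_big.cell_approx(4)[OF PB[of n] k[of n, THEN conjunct1] k[of n, THEN conjunct2]]
      by (simp add: P2'_def el_def)
  qed
  have lQ1: "Q1 \<longlonglongrightarrow> f (\<psi> b)"
  proof (rule tendsto_bound_seq[where c=Ec and r=el, OF _ el_lim])
    fix n
    show "norm (Q1 n - f (\<psi> b)) \<le> Ec * el n"
      using poly_big.cell_approx(3)[OF PB[of n] k'[of n, THEN conjunct1] k'[of n, THEN conjunct2]]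
      by (simp add: Q1_def el_def)
  qed
  have lQ2: "Q2 \<longlonglongrightarrow> f (\<psi> b)"
  proof (rule tendsto_bound_seq[where c=Ec and r=el, OF _ el_lim])
    fix n
    show "norm (Q2 n - f (\<psi> b)) \<le> Ec * el n"
      using poly_big.cell_approx(4)[OF PB[of n] k'[of n, THEN conjunct1] k'[of n, THEN conjunct2]]
      by (simp add: Q2_def el_def)
  qed
  have lx1: "x1 \<longlonglongrightarrow> 1"
  proof (rule tendsto_bound_seq[where c=Ec and r=el, OF _ el_lim])
    fix n
    show "norm (x1 n - 1) \<le> Ec * el n"
      using poly_big.cell_approx(5)[OF PB[of n] k[of n, THEN conjunct1] k[of n, THEN conjunct2]]
      by (simp add: x1_def el_def)
  qed
  have lx2: "x2 \<longlonglongrightarrow> 1"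
  proof (rule tendsto_bound_seq[where c=Ec and r=el, OF _ el_lim])
    fix n
    show "norm (x2 n - 1) \<le> Ec * el n"
      using poly_big.cell_approx(5)[OF PB[of n] k'[of n, THEN conjunct1] k'[of n, THEN conjunct2]]
      by (simp add: x2_def el_def)
  qed
  have psi_ne: "\<psi> a \<noteq> \<psi> b" using arc_psi[of a] arc_psi[of b] a b ab by auto
  have psi_r: "\<psi> a \<in> {0..<1}" "\<psi> b \<in> {0..<1}"
    using psi_in[of a] psi_in[of b] psi_lt1[of a] psi_lt1[of b] a b by auto
  have "0 < circ_dist (\<psi> b) (\<psi> a)" using psi_ne psi_r by (intro circ_dist_pos) auto
  then have "0 < L1 * circ_dist (\<psi> b) (\<psi> a)" using L1pos by simp
  also have "\<dots> \<le> norm (f (\<psi> b) - f (\<psi> a))" using bil by auto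
  finally have fab: "0 < norm (f (\<psi> b) - f (\<psi> a))" .
  define H where "H n = x1 n * x2 n * ((norm (U1 n - W1 n))\<^sup>2 + (norm (U2 n - W2 n))\<^sup>2) /
      (2 * (norm (Q1 n - P1' n) * norm (Q2 n - P2' n)))" for n
  have lH: "H \<longlonglongrightarrow> 1 * 1 * ((norm (v (\<psi> a) - v (\<psi> b)))\<^sup>2 + (norm (v (\<psi> a) - v (\<psi> b)))\<^sup>2) /
      (2 * (norm (f (\<psi> b) - f (\<psi> a)) * norm (f (\<psi> b) - f (\<psi> a))))"
    unfolding H_def using fab
    by (intro tendsto_intros lx1 lx2 lU1 lU2 lW1 lW2 lP1 lP2 lQ1 lQ2) auto
  also have "1 * 1 * ((norm (v (\<psi> a) - v (\<psi> b)))\<^sup>2 + (norm (v (\<psi> a) - v (\<psi> b)))\<^sup>2) /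
      (2 * (norm (f (\<psi> b) - f (\<psi> a)) * norm (f (\<psi> b) - f (\<psi> a)))) =
      (norm (v (\<psi> a) - v (\<psi> b)))\<^sup>2 / (norm (f (\<psi> a) - f (\<psi> b)))\<^sup>2"
    using fab by (simp add: norm_minus_commute power2_eq_square)
  finally have lH': "H \<longlonglongrightarrow> (norm (v (\<psi> a) - v (\<psi> b)))\<^sup>2 / (norm (f (\<psi> a) - f (\<psi> b)))\<^sup>2" .
  have "(\<lambda>n. norm (Q1 n - P1' n)) \<longlonglongrightarrow> norm (f (\<psi> b) - f (\<psi> a))"
    by (intro tendsto_intros lQ1 lP1)
  then have ev: "eventually (\<lambda>n. 0 < norm (Q1 n - P1' n)) sequentially"
    using fab by (rule order_tendstoD(1))
  have "eventually (\<lambda>n. H n = poly_big.G f (th n) (M n) (a, b)) sequentially"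
    using ev
  proof (rule eventually_mono)
    fix n assume "0 < norm (Q1 n - P1' n)"
    then have "k n \<noteq> k' n" by (auto simp: Q1_def P1'_def)
    then have "poly_big.G f (th n) (M n) (a, b) = H n"
      unfolding H_def x1_def x2_def U1_def U2_def W1_def W2_def P1'_def P2'_def Q1_def Q2_def el_def
      by (rule poly_big.G_formula[OF PB[of n] k[of n, THEN conjunct1] k'[of n, THEN conjunct1]
            k[of n, THEN conjunct2] k'[of n, THEN conjunct2]])
    then show "H n = poly_big.G f (th n) (M n) (a, b)" by simp
  qed
  then show ?thesis by (rule Lim_transform_eventually[OF lH'])
qed

end

theorem mainTheorem6:
  fixes f :: "real \<Rightarrow> 'a::euclidean_space" and \<theta> :: "nat \<Rightarrow> nat \<Rightarrow> real" and L1 L2 :: real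
  assumes "W2inf_periodic f"
    and "0 < L1" and "L1 \<le> L2"
    and "\<forall>x y. L1 * circ_dist x y \<le> norm (f x - f y) \<and> norm (f x - f y) \<le> L2 * circ_dist x y"
    and "\<forall>m\<ge>1. 0 \<le> \<theta> m 0 \<and> (\<forall>k. Suc k < m \<longrightarrow> \<theta> m k < \<theta> m (Suc k)) \<and> \<theta> m (m - 1) < 1"
    and "\<forall>m\<ge>1. \<forall>k<m. norm (Delta1 f (\<theta> m) m k) = (\<Sum>l<m. norm (Delta1 f (\<theta> m) m l)) / real m"
  shows "(\<lambda>m. disc_E1 f (\<theta> m) m) \<longlonglongrightarrow> E1 f"
proof -
  have CU: "curve f L1 L2" using assms(1-4) unfolding curve_def by blast
  interpret curve f L1 L2 by (rule CU)
  define N0 :: nat where "N0 = nat (ceiling (L2 / L1)) + 2"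
  have PB: "poly_big f L1 L2 (\<theta> m) m" if m: "N0 \<le> m" for m
  proof -
    have m1: "1 \<le> m" "2 \<le> m" using m by (auto simp: N0_def)
    have "L2 / L1 \<le> real (nat (ceiling (L2 / L1)))" by linarith
    then have "L2 / L1 + 2 \<le> real m" using m by (simp add: N0_def)
    then have "L2 / L1 < real m - 1" by simp
    then have big: "L2 < (real m - 1) * L1" using assms(2) by (simp add: field_simps)
    have t5: "0 \<le> \<theta> m 0 \<and> (\<forall>k. Suc k < m \<longrightarrow> \<theta> m k < \<theta> m (Suc k)) \<and> \<theta> m (m - 1) < 1"
      using assms(5) m1(1) by blast
    have t6: "\<forall>k<m. norm (Delta1 f (\<theta> m) m k) = (\<Sum>l<m. norm (Delta1 f (\<theta> m) m l)) / real m"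
      using assms(6) m1(1) by blast
    have "poly f L1 L2 (\<theta> m) m"
      unfolding poly_def poly_axioms_def using CU m1(2) t5 t6 by blast
    then show ?thesis unfolding poly_big_def poly_big_axioms_def using big by blast
  qed
  define A where "A = {0..Lp} \<times> {0..Lp}"
  define Mc0 where "Mc0 = poly_big.Mc f L1 L2"
  define s where "s n p = indicator A p *\<^sub>R poly_big.G f (\<theta> (n + N0)) (n + N0) p" for n p
  define \<gamma> where "\<gamma> = arclen_param f"
  define \<tau> where "\<tau> x = vector_derivative \<gamma> (at x)" for x
  define F where "F p = indicator A p *\<^sub>R ((norm (\<tau> (fst p) - \<tau> (snd p)))\<^sup>2 / (norm (\<gamma> (fst p) - \<gamma> (snd p)))\<^sup>2)" for p
  have E1eq: "E1 f = 1/2 * integral\<^sup>L lborel F"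
    unfolding E1_def Let_def set_lebesgue_integral_def F_def \<tau>_def \<gamma>_def A_def curve_length_def Lp_def
    by simp
  have disc: "disc_E1 f (\<theta> (n + N0)) (n + N0) = 1/2 * integral\<^sup>L lborel (s n)" for n
    using poly_big.G_integral[OF PB[of "n + N0"]] by (simp add: s_def[abs_def] A_def)
  have Ameas: "A \<in> sets (lborel :: (real \<times> real) measure)"
    by (simp add: A_def borel_prod[symmetric])
  have Afin: "emeasure (lborel :: (real \<times> real) measure) A = ennreal (Lp * Lp)"
    unfolding A_def using Lp_pos by (intro measure_lborel_Times_real(1)) auto
  have Fm: "F \<in> borel_measurable lborel"
    using F_meas unfolding F_def[abs_def] A_def \<tau>_def \<gamma>_def .
  have conv: "(\<lambda>n. integral\<^sup>L lborel (s n)) \<longlonglongrightarrow> integral\<^sup>L lborel F"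
  proof (rule integral_dominated_convergence[where w="\<lambda>p. Mc0 * indicator A p"])
    show "F \<in> borel_measurable lborel" by (rule Fm)
    show "s n \<in> borel_measurable lborel" for n
      unfolding s_def[abs_def]
      by (intro borel_measurable_scaleR borel_measurable_indicator Ameas poly_big.G_meas[OF PB]) auto
    show "integrable lborel (\<lambda>p. Mc0 * indicator A p)"
      using Ameas Afin by (intro integrable_mult_right integrable_real_indicator) auto
    show "AE p in lborel. norm (s n p) \<le> Mc0 * indicator A p" for n
    proof (rule AE_I2)
      fix p :: "real \<times> real"
      have "0 \<le> poly_big.G f (\<theta> (n + N0)) (n + N0) p \<and> poly_big.G f (\<theta> (n + N0)) (n + N0) p \<le> Mc0"
        using poly_big.G_bound[OF PB[of "n + N0"]] by (simp add: Mc0_def)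
      then show "norm (s n p) \<le> Mc0 * indicator A p"
        by (cases "p \<in> A") (auto simp: s_def)
    qed
    define N where "N = {x :: real \<times> real. (1, -1) \<bullet> x = 0} \<union> {x. (1, 0) \<bullet> x = 0} \<union> {x. (1, 0) \<bullet> x = Lp}
      \<union> {x. (0, 1) \<bullet> x = 0} \<union> {x. (0, 1) \<bullet> x = Lp}"
    have Nnull: "N \<in> null_sets lborel"
      unfolding N_def by (intro null_sets.Un hyperplane_null) (auto simp: zero_prod_def)
    show "AE p in lborel. (\<lambda>n. s n p) \<longlonglongrightarrow> F p"
    proof (rule AE_I'[OF Nnull], safe)
      fix a b :: real
      assume nc: "\<not> (\<lambda>n. s n (a, b)) \<longlonglongrightarrow> F (a, b)"
      show "(a, b) \<in> N"
      proof (rule ccontr)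
        assume nN: "(a, b) \<notin> N"
        then have ab: "a \<noteq> b" "a \<noteq> 0" "a \<noteq> Lp" "b \<noteq> 0" "b \<noteq> Lp" by (auto simp: N_def)
        show False
        proof (cases "(a, b) \<in> A")
          case False
          then have "s n (a, b) = F (a, b)" for n by (simp add: s_def F_def)
          then show False using nc by simp
        next
          case True
          then have a: "a \<in> {0<..<Lp}" and b: "b \<in> {0<..<Lp}" using ab by (auto simp: A_def)
          have Mlim: "(\<lambda>n. L2 / real (n + N0)) \<longlonglongrightarrow> 0"
            using LIMSEQ_ignore_initial_segment[OF lim_const_over_n[of L2], of N0] by simp
          have lim: "(\<lambda>n. poly_big.G f (\<theta> (n + N0)) (n + N0) (a, b)) \<longlonglongrightarrow>
              (norm (v (\<psi> a) - v (\<psi> b)))\<^sup>2 / (norm (f (\<psi> a) - f (\<psi> b)))\<^sup>2"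
            by (rule pointwise[where th="\<lambda>n. \<theta> (n + N0)" and M="\<lambda>n. n + N0", OF PB Mlim a b ab(1)]) simp
          have "F (a, b) = (norm (v (\<psi> a) - v (\<psi> b)))\<^sup>2 / (norm (f (\<psi> a) - f (\<psi> b)))\<^sup>2"
            using True tau_eq[OF a] tau_eq[OF b] gamma_eq[of a] gamma_eq[of b] a b
            by (simp add: F_def \<tau>_def \<gamma>_def)
          moreover have "s n (a, b) = poly_big.G f (\<theta> (n + N0)) (n + N0) (a, b)" for n
            using True by (simp add: s_def)
          ultimately show False using nc lim by simp
        qed
      qed
    qed
  qed
  have "(\<lambda>n. disc_E1 f (\<theta> (n + N0)) (n + N0)) \<longlonglongrightarrow> 1/2 * integral\<^sup>L lborel F"
    unfolding disc by (intro tendsto_mult_left conv)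
  then have "(\<lambda>n. disc_E1 f (\<theta> (n + N0)) (n + N0)) \<longlonglongrightarrow> E1 f" by (simp add: E1eq)
  then show ?thesis by (rule LIMSEQ_offset)
qed


end
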